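(* A PFSA is irreducible if and only if it has no two distinct equivalent states. Furthermore, if two irreducible PFSA $G_1=(\Sigma,Q_1,\delta_1,\tilde\pi_1)$ and $G_2=(\Sigma,Q_2,\delta_2,\tilde\pi_2)$ generate the same stochastic process, then there is a bijection $f:Q_1\to Q_2$ such that $f(\delta_1(q,\sigma))=\delta_2(f(q),\sigma)$ and $\tilde\pi_2(f(q))=\tilde\pi_1(q)$ for all $q\in Q_1$, $\sigma\in\Sigma$.
   Context: A PFSA $G=(\Sigma,Q,\delta,\tilde\pi)$ consists of a finite alphabet $\Sigma$, a finite state set $Q$, observation probabilities $\tilde\pi(q,\cdot)$ (a probability distribution on $\Sigma$ for each $q$), and a partial transition map $\delta:Q\times\Sigma\to Q$ defined exactly where $\tilde\pi(q,\sigma)>0$; its graph (edges $q\to\delta(q,\sigma)$) is assumed strongly connected. It generates a process by emitting $\sigma$ with probability $\tilde\pi(q,\sigma)$ from current state $q$ and moving to $\delta(q,\sigma)$, the initial state drawn from the stationary distribution of the transition matrix $\pi(q,q')=\sum_{\sigma:\delta(q,\sigma)=q'}\tilde\pi(q,\sigma)$. $G$ is irreducible if no PFSA with strictly fewer states generates the same process. For a state $q$, $\mu_q$ is the probability measure on $\Sigma^\omega$ with $\mu_q(x\Sigma^\omega)=\tilde\pi(q,x)$, where for $x=\sigma_1\cdots\sigma_n$, $\tilde\pi(q,x)=\prod_{i=1}^n\tilde\pi(q_{i-1},\sigma_i)$ with $q_0=q$, $q_i=\delta(q_{i-1},\sigma_i)$ (and $0$ if some transition is undefined), i.e. the probability of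 emitting $x$ starting from $q$. Two states $q,q'$ are equivalent iff $\mu_q=\mu_{q'}$. *)

theory Defs
  imports Complex_Main
begin

text \<open>A PFSA is given by an alphabet S, a state set Q, a transition map d
  (meaningful only where the observation probability is positive) and
  observation probabilities p.\<close>

definition pfsa_edges :: "'a set \<Rightarrow> 'q set \<Rightarrow> ('q \<Rightarrow> 'a \<Rightarrow> 'q) \<Rightarrow> ('q \<Rightarrow> 'a \<Rightarrow> real) \<Rightarrow> ('q \<times> 'q) set" where
  "pfsa_edges S Q d p = {(q, d q s) | q s. q \<in> Q \<and> s \<in> S \<and> p q s > 0}"

definition pfsa :: "'a set \<Rightarrow> 'q set \<Rightarrow> ('q \<Rightarrow> 'a \<Rightarrow> 'q) \<Rightarrow> ('q \<Rightarrow> 'a \<Rightarrow> real) \<Rightarrow> bool" where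
  "pfsa S Q d p \<longleftrightarrow>
     finite S \<and> S \<noteq> {} \<and> finite Q \<and> Q \<noteq> {} \<and>
     (\<forall>q\<in>Q. (\<forall>s\<in>S. p q s \<ge> 0) \<and> (\<Sum>s\<in>S. p q s) = 1) \<and>
     (\<forall>q\<in>Q. \<forall>s\<in>S. p q s > 0 \<longrightarrow> d q s \<in> Q) \<and>
     (\<forall>q\<in>Q. \<forall>q'\<in>Q. (q, q') \<in> (pfsa_edges S Q d p)\<^sup>*)"

definition trans_prob :: "'a set \<Rightarrow> ('q \<Rightarrow> 'a \<Rightarrow> 'q) \<Rightarrow> ('q \<Rightarrow> 'a \<Rightarrow> real) \<Rightarrow> 'q \<Rightarrow> 'q \<Rightarrow> real" where
  "trans_prob S d p q q' = (\<Sum>s\<in>{s\<in>S. p q s > 0 \<and> d q s = q'}. p q s)"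

definition is_stationary :: "'a set \<Rightarrow> 'q set \<Rightarrow> ('q \<Rightarrow> 'a \<Rightarrow> 'q) \<Rightarrow> ('q \<Rightarrow> 'a \<Rightarrow> real) \<Rightarrow> ('q \<Rightarrow> real) \<Rightarrow> bool" where
  "is_stationary S Q d p v \<longleftrightarrow>
     (\<forall>q\<in>Q. v q \<ge> 0) \<and> (\<forall>q. q \<notin> Q \<longrightarrow> v q = 0) \<and> (\<Sum>q\<in>Q. v q) = 1 \<and>
     (\<forall>q'\<in>Q. (\<Sum>q\<in>Q. v q * trans_prob S d p q q') = v q')"

text \<open>The (unique, by strong connectivity) stationary distribution.\<close>
definition stationary :: "'a set \<Rightarrow> 'q set \<Rightarrow> ('q \<Rightarrow> 'a \<Rightarrow> 'q) \<Rightarrow> ('q \<Rightarrow> 'a \<Rightarrow> real) \<Rightarrow> 'q \<Rightarrow> real" where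
  "stationary S Q d p = (THE v. is_stationary S Q d p v)"

fun word_prob :: "('q \<Rightarrow> 'a \<Rightarrow> 'q) \<Rightarrow> ('q \<Rightarrow> 'a \<Rightarrow> real) \<Rightarrow> 'q \<Rightarrow> 'a list \<Rightarrow> real" where
  "word_prob d p q [] = 1"
| "word_prob d p q (s # x) = (if p q s > 0 then p q s * word_prob d p (d q s) x else 0)"

text \<open>Probability of the cylinder x Sigma^omega under the generated process.\<close>
definition process_prob :: "'a set \<Rightarrow> 'q set \<Rightarrow> ('q \<Rightarrow> 'a \<Rightarrow> 'q) \<Rightarrow> ('q \<Rightarrow> 'a \<Rightarrow> real) \<Rightarrow> 'a list \<Rightarrow> real" where
  "process_prob S Q d p x = (\<Sum>q\<in>Q. stationary S Q d p q * word_prob d p q x)"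

text \<open>Two PFSA over the same alphabet generate the same process iff the
  generated measures on Sigma^omega agree on all cylinders (which determine them).\<close>
definition same_process ::
  "'a set \<Rightarrow> 'q set \<Rightarrow> ('q \<Rightarrow> 'a \<Rightarrow> 'q) \<Rightarrow> ('q \<Rightarrow> 'a \<Rightarrow> real) \<Rightarrow>
   'r set \<Rightarrow> ('r \<Rightarrow> 'a \<Rightarrow> 'r) \<Rightarrow> ('r \<Rightarrow> 'a \<Rightarrow> real) \<Rightarrow> bool" where
  "same_process S Q1 d1 p1 Q2 d2 p2 \<longleftrightarrow>
     (\<forall>x\<in>lists S. process_prob S Q1 d1 p1 x = process_prob S Q2 d2 p2 x)"

text \<open>Since only the cardinality of the state set
  matters, competing PFSA are taken w.l.o.g. with states in nat.\<close>
definition irreducible_pfsa :: "'a set \<Rightarrow> 'q set \<Rightarrow> ('q \<Rightarrow> 'a \<Rightarrow> 'q) \<Rightarrow> ('q \<Rightarrow> 'a \<Rightarrow> real) \<Rightarrow> bool" where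
  "irreducible_pfsa S Q d p \<longleftrightarrow>
     \<not> (\<exists>(Q' :: nat set) d' p'. pfsa S Q' d' p' \<and> card Q' < card Q \<and>
            same_process S Q d p Q' d' p')"

text \<open>mu_q = mu_q' iff they agree on all cylinders.\<close>
definition equiv_states :: "'a set \<Rightarrow> ('q \<Rightarrow> 'a \<Rightarrow> 'q) \<Rightarrow> ('q \<Rightarrow> 'a \<Rightarrow> real) \<Rightarrow> 'q \<Rightarrow> 'q \<Rightarrow> bool" where
  "equiv_states S d p q q' \<longleftrightarrow> (\<forall>x\<in>lists S. word_prob d p q x = word_prob d p q' x)"

end

theory Submission
  imports Defs "Jordan_Normal_Form.Determinant"
begin

lemma pfsaD:
  assumes "pfsa S Q d p"
  shows "finite S" "S \<noteq> {}" "finite Q" "Q \<noteq> {}"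
    "\<And>q s. q \<in> Q \<Longrightarrow> s \<in> S \<Longrightarrow> p q s \<ge> 0"
    "\<And>q. q \<in> Q \<Longrightarrow> (\<Sum>s\<in>S. p q s) = 1"
    "\<And>q s. q \<in> Q \<Longrightarrow> s \<in> S \<Longrightarrow> p q s > 0 \<Longrightarrow> d q s \<in> Q"
    "\<And>q q'. q \<in> Q \<Longrightarrow> q' \<in> Q \<Longrightarrow> (q, q') \<in> (pfsa_edges S Q d p)\<^sup>*"
  using assms unfolding pfsa_def by auto

lemma p_le1:
  assumes "pfsa S Q d p" "q \<in> Q" "s \<in> S"
  shows "p q s \<le> 1"
proof -
  have "p q s \<le> (\<Sum>s\<in>S. p q s)"
    by (rule member_le_sum) (use assms pfsaD in auto)
  then show ?thesis using pfsaD(6)[OF assms(1,2)] by simp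
qed

lemma T_nonneg:
  "trans_prob S d p q q' \<ge> 0"
  unfolding trans_prob_def by (rule sum_nonneg) auto

lemma T_sum:
  assumes "pfsa S Q d p" "q \<in> Q"
  shows "(\<Sum>q'\<in>Q. trans_prob S d p q q') = 1"
proof -
  have fS: "finite S" using pfsaD[OF assms(1)] by auto
  have "(\<Sum>q'\<in>Q. trans_prob S d p q q') =
        (\<Sum>q'\<in>Q. sum (p q) {s \<in> {s\<in>S. p q s > 0}. d q s = q'})"
    unfolding trans_prob_def by (intro sum.cong) auto
  also have "\<dots> = sum (p q) {s\<in>S. p q s > 0}"
    by (rule sum.group) (use fS pfsaD[OF assms(1)] assms(2) in auto)
  also have "\<dots> = sum (p q) S"
    by (rule sum.mono_neutral_left) (use fS pfsaD(5)[OF assms(1) assms(2)] in force)+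
  finally show ?thesis using pfsaD(6)[OF assms] by simp
qed

lemma T_edge:
  assumes "pfsa S Q d p" "s \<in> S" "p q s > 0"
  shows "trans_prob S d p q (d q s) \<ge> p q s"
  unfolding trans_prob_def
  by (rule member_le_sum) (use assms pfsaD[OF assms(1)] in auto)

lemma inv_zero:
  assumes G: "pfsa S Q d p"
    and nn: "\<forall>q\<in>Q. z q \<ge> 0"
    and st: "\<forall>q'\<in>Q. (\<Sum>q\<in>Q. z q * trans_prob S d p q q') = z q'"
    and q0: "q0 \<in> Q" "z q0 = 0" and q: "q \<in> Q"
  shows "z q = 0"
proof -
  have path: "(q, q0) \<in> (pfsa_edges S Q d p)\<^sup>*" using pfsaD(8)[OF G q q0(1)] .
  show ?thesis using path
  proof (induction rule: converse_rtrancl_induct)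
    case base then show ?case using q0 by simp
  next
    case (step y y')
    from step.hyps(1) obtain s where ys: "y \<in> Q" "s \<in> S" "p y s > 0" "y' = d y s"
      unfolding pfsa_edges_def by auto
    have y'Q: "y' \<in> Q" using pfsaD(7)[OF G ys(1-3)] ys(4) by simp
    have "(\<Sum>q\<in>Q. z q * trans_prob S d p q y') = 0" using st y'Q step.IH by simp
    moreover have nn2: "\<And>x. x \<in> Q \<Longrightarrow> 0 \<le> z x * trans_prob S d p x y'"
      using nn T_nonneg by (metis mult_nonneg_nonneg)
    ultimately have "\<forall>q\<in>Q. z q * trans_prob S d p q y' = 0"
      using sum_nonneg_eq_0_iff[of Q "\<lambda>q. z q * trans_prob S d p q y'"] pfsaD(3)[OF G]
      by blast
    then have "z y * trans_prob S d p y y' = 0" using ys(1) by blast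
    moreover have "trans_prob S d p y y' > 0" using T_edge[OF G ys(2,3)] ys by simp
    ultimately show ?case by simp
  qed
qed

lemma stat_pos:
  assumes G: "pfsa S Q d p" and v: "is_stationary S Q d p v" and q: "q \<in> Q"
  shows "v q > 0"
proof (rule ccontr)
  assume "\<not> v q > 0"
  then have "v q = 0" using v q unfolding is_stationary_def by force
  then have "\<forall>q'\<in>Q. v q' = 0"
    using inv_zero[OF G _ _ q] v unfolding is_stationary_def by blast
  then show False using v unfolding is_stationary_def by simp
qed

lemma stat_unique:
  assumes G: "pfsa S Q d p" and v: "is_stationary S Q d p v" and w: "is_stationary S Q d p w"
  shows "v = w"
proof -
  have fQ: "finite Q" and neQ: "Q \<noteq> {}" using pfsaD[OF G] by auto
  define t where "t = Min ((\<lambda>q. v q / w q) ` Q)"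
  have "t \<in> (\<lambda>q. v q / w q) ` Q" unfolding t_def by (rule Min_in) (use fQ neQ in auto)
  then obtain qm where qm: "qm \<in> Q" "t = v qm / w qm" by auto
  have wpos: "\<And>q. q \<in> Q \<Longrightarrow> w q > 0" using stat_pos[OF G w] .
  have tle: "\<And>q. q \<in> Q \<Longrightarrow> t \<le> v q / w q" unfolding t_def using fQ by auto
  define z where "z q = v q - t * w q" for q
  have znn: "\<forall>q\<in>Q. z q \<ge> 0"
  proof
    fix q assume q: "q \<in> Q"
    have "t * w q \<le> v q" using tle[OF q] wpos[OF q] by (simp add: pos_le_divide_eq)
    then show "z q \<ge> 0" unfolding z_def by simp
  qed
  have zst: "\<forall>q'\<in>Q. (\<Sum>q\<in>Q. z q * trans_prob S d p q q') = z q'"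
  proof
    fix q' assume q': "q' \<in> Q"
    have "(\<Sum>q\<in>Q. z q * trans_prob S d p q q') =
       (\<Sum>q\<in>Q. v q * trans_prob S d p q q') - t * (\<Sum>q\<in>Q. w q * trans_prob S d p q q')"
      unfolding z_def by (simp add: sum_subtractf sum_distrib_left algebra_simps)
    then show "(\<Sum>q\<in>Q. z q * trans_prob S d p q q') = z q'"
      using v w q' unfolding is_stationary_def z_def by simp
  qed
  have z0: "z qm = 0" using qm wpos[OF qm(1)] unfolding z_def by simp
  have vt: "\<And>q. q \<in> Q \<Longrightarrow> v q = t * w q"
    using inv_zero[OF G znn zst qm(1) z0] unfolding z_def by force
  have "1 = (\<Sum>q\<in>Q. v q)" using v unfolding is_stationary_def by simp
  also have "\<dots> = t * (\<Sum>q\<in>Q. w q)" using vt by (simp add: sum_distrib_left)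
  also have "\<dots> = t" using w unfolding is_stationary_def by simp
  finally have t1: "t = 1" by simp
  show ?thesis
  proof
    fix q show "v q = w q"
      using vt[of q] t1 v w unfolding is_stationary_def by (cases "q \<in> Q") auto
  qed
qed

lemma left_null_exists:
  assumes G: "pfsa S Q d p"
  shows "\<exists>u. (\<exists>q\<in>Q. u q \<noteq> 0) \<and> (\<forall>q'\<in>Q. (\<Sum>q\<in>Q. u q * trans_prob S d p q q') = u q')"
proof -
  let ?T = "trans_prob S d p"
  define n where "n = card Q"
  have fQ: "finite Q" using pfsaD[OF G] by auto
  obtain e where e: "bij_betw e {0..<n} Q" using ex_bij_betw_nat_finite[OF fQ] n_def by blast
  have eQ: "\<And>i. i < n \<Longrightarrow> e i \<in> Q" using e bij_betwE by fastforce
  have reidx: "\<And>f. (\<Sum>i = 0..<n. f (e i)) = (\<Sum>q\<in>Q. f q)"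
    using sum.reindex_bij_betw[OF e] by blast
  define A :: "real mat" where "A = mat n n (\<lambda>(i,j). ?T (e j) (e i) - (if i = j then 1 else 0))"
  have A: "A \<in> carrier_mat n n" unfolding A_def by simp
  have At: "transpose_mat A \<in> carrier_mat n n" using A by simp
  define one where "one = vec n (\<lambda>_. 1::real)"
  have "transpose_mat A *\<^sub>v one = 0\<^sub>v n"
  proof (rule eq_vecI)
    fix i assume i: "i < dim_vec (0\<^sub>v n :: real vec)"
    then have i': "i < n" by simp
    have "(transpose_mat A *\<^sub>v one) $ i = (\<Sum>j = 0..<n. (?T (e i) (e j) - (if i = j then 1 else 0)))"
      using i' A unfolding one_def A_def by (auto simp add: scalar_prod_def intro!: sum.cong)
    also have "\<dots> = (\<Sum>j = 0..<n. ?T (e i) (e j)) - (\<Sum>j = 0..<n. (if i = j then 1 else 0))"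
      by (simp add: sum_subtractf)
    also have "\<dots> = (\<Sum>q\<in>Q. ?T (e i) q) - 1" using i' by (simp add: reidx)
    also have "\<dots> = 0" using T_sum[OF G eQ[OF i']] by simp
    finally show "(transpose_mat A *\<^sub>v one) $ i = 0\<^sub>v n $ i" using i' by simp
  qed (use A in simp)
  moreover have "one \<in> carrier_vec n" "one \<noteq> 0\<^sub>v n"
  proof -
    show "one \<in> carrier_vec n" unfolding one_def by simp
    have "n > 0" using pfsaD[OF G] n_def by (simp add: card_gt_0_iff)
    then have "one $ 0 \<noteq> (0\<^sub>v n) $ 0" unfolding one_def by simp
    then show "one \<noteq> 0\<^sub>v n" by metis
  qed
  ultimately have "det (transpose_mat A) = 0" using det_0_iff_vec_prod_zero[OF At] by blast
  then have "det A = 0" using det_transpose[OF A] by simp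
  then obtain u where u: "u \<in> carrier_vec n" "u \<noteq> 0\<^sub>v n" "A *\<^sub>v u = 0\<^sub>v n"
    using det_0_iff_vec_prod_zero[OF A] by blast
  define f where "f = inv_into {0..<n} e"
  have fe: "\<And>i. i < n \<Longrightarrow> f (e i) = i" unfolding f_def
    using e by (simp add: bij_betw_imp_inj_on inv_into_f_f)
  have ef: "\<And>q. q \<in> Q \<Longrightarrow> e (f q) = q \<and> f q < n" unfolding f_def
    using e by (metis atLeastLessThan_iff bij_betw_def f_inv_into_f inv_into_into)
  define uf where "uf q = u $ (f q)" for q
  have "\<exists>i<n. u $ i \<noteq> 0"
  proof (rule ccontr)
    assume "\<not> ?thesis"
    then have "u = 0\<^sub>v n" using u(1) by (intro eq_vecI) auto
    then show False using u(2) by simp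
  qed
  then obtain i where i: "i < n" "u $ i \<noteq> 0" by blast
  have c1: "\<exists>q\<in>Q. uf q \<noteq> 0" using i eQ fe unfolding uf_def by metis
  have c2: "\<forall>q'\<in>Q. (\<Sum>q\<in>Q. uf q * ?T q q') = uf q'"
  proof
    fix q' assume q': "q' \<in> Q"
    define j where "j = f q'"
    have j: "j < n" "e j = q'" using ef[OF q'] j_def by auto
    have "0 = (A *\<^sub>v u) $ j" using u(3) j by simp
    also have "\<dots> = (\<Sum>i = 0..<n. (?T (e i) (e j) - (if j = i then 1 else 0)) * u $ i)"
      using j A u(1) unfolding A_def by (simp add: scalar_prod_def mult.commute)
    also have "\<dots> = (\<Sum>i = 0..<n. ?T (e i) (e j) * u $ i) - (\<Sum>i = 0..<n. (if j = i then u $ i else 0))"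
    proof -
      have "\<And>i. (?T (e i) (e j) - (if j = i then 1 else 0)) * u $ i =
            ?T (e i) (e j) * u $ i - (if j = i then u $ i else 0)" by (simp add: algebra_simps)
      then show ?thesis by (simp only: sum_subtractf)
    qed
    also have "\<dots> = (\<Sum>i = 0..<n. ?T (e i) q' * uf (e i)) - u $ j"
      using j fe unfolding uf_def by simp
    also have "\<dots> = (\<Sum>q\<in>Q. ?T q q' * uf q) - uf q'"
      using reidx[of "\<lambda>q. ?T q q' * uf q"] j fe unfolding uf_def j_def by simp
    finally show "(\<Sum>q\<in>Q. uf q * ?T q q') = uf q'" by (simp add: mult.commute)
  qed
  show ?thesis using c1 c2 by blast
qed

lemma stat_exists:
  assumes G: "pfsa S Q d p"
  shows "\<exists>v. is_stationary S Q d p v"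
proof -
  let ?T = "trans_prob S d p"
  have fQ: "finite Q" using pfsaD[OF G] by auto
  obtain u where u1: "\<exists>q\<in>Q. u q \<noteq> 0" and u2: "\<forall>q'\<in>Q. (\<Sum>q\<in>Q. u q * ?T q q') = u q'"
    using left_null_exists[OF G] by blast
  define y where "y q = \<bar>u q\<bar>" for q
  have ge: "\<And>q'. q' \<in> Q \<Longrightarrow> y q' \<le> (\<Sum>q\<in>Q. y q * ?T q q')"
  proof -
    fix q' assume q': "q' \<in> Q"
    have "y q' = \<bar>\<Sum>q\<in>Q. u q * ?T q q'\<bar>" using u2 q' unfolding y_def by simp
    also have "\<dots> \<le> (\<Sum>q\<in>Q. \<bar>u q * ?T q q'\<bar>)" by (rule sum_abs)
    also have "\<dots> = (\<Sum>q\<in>Q. y q * ?T q q')" unfolding y_def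
      by (simp add: abs_mult T_nonneg)
    finally show "y q' \<le> (\<Sum>q\<in>Q. y q * ?T q q')" .
  qed
  have "(\<Sum>q'\<in>Q. (\<Sum>q\<in>Q. y q * ?T q q')) = (\<Sum>q\<in>Q. y q * (\<Sum>q'\<in>Q. ?T q q'))"
    by (subst sum.swap) (simp add: sum_distrib_left)
  also have "\<dots> = (\<Sum>q\<in>Q. y q)" using T_sum[OF G] by simp
  finally have eqsum: "(\<Sum>q'\<in>Q. (\<Sum>q\<in>Q. y q * ?T q q') - y q') = 0"
    by (simp add: sum_subtractf)
  have eq: "\<forall>q'\<in>Q. (\<Sum>q\<in>Q. y q * ?T q q') = y q'"
  proof -
    have "\<forall>q'\<in>Q. (\<Sum>q\<in>Q. y q * ?T q q') - y q' = 0"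
      using sum_nonneg_eq_0_iff[OF fQ, of "\<lambda>q'. (\<Sum>q\<in>Q. y q * ?T q q') - y q'"] eqsum ge
      by simp
    then show ?thesis by simp
  qed
  define Y where "Y = (\<Sum>q\<in>Q. y q)"
  have Ypos: "Y > 0"
  proof -
    obtain q0 where q0: "q0 \<in> Q" "u q0 \<noteq> 0" using u1 by blast
    have "y q0 \<le> Y" unfolding Y_def by (rule member_le_sum) (use q0 fQ y_def in auto)
    moreover have "y q0 > 0" using q0 y_def by simp
    ultimately show ?thesis by simp
  qed
  define v where "v q = (if q \<in> Q then y q / Y else 0)" for q
  have "is_stationary S Q d p v"
    unfolding is_stationary_def
  proof (intro conjI ballI allI impI)
    fix q assume "q \<in> Q" then show "v q \<ge> 0" unfolding v_def y_def using Ypos by simp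
  next
    fix q assume "q \<notin> Q" then show "v q = 0" unfolding v_def by simp
  next
    show "(\<Sum>q\<in>Q. v q) = 1" unfolding v_def using Ypos
      by (simp add: sum_divide_distrib[symmetric] Y_def)
  next
    fix q' assume q': "q' \<in> Q"
    have "(\<Sum>q\<in>Q. v q * ?T q q') = (\<Sum>q\<in>Q. y q * ?T q q') / Y"
      unfolding v_def by (simp add: sum_divide_distrib)
    then show "(\<Sum>q\<in>Q. v q * ?T q q') = v q'" using eq q' unfolding v_def by simp
  qed
  then show ?thesis by blast
qed

lemma stationary_is:
  assumes G: "pfsa S Q d p"
  shows "is_stationary S Q d p (stationary S Q d p)"
  unfolding stationary_def
  using stat_exists[OF G] stat_unique[OF G] by (metis theI)

lemma stationary_eq:
  assumes G: "pfsa S Q d p" and "is_stationary S Q d p v"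
  shows "stationary S Q d p = v"
  using stat_unique[OF G stationary_is[OF G] assms(2)] .

fun run :: "('q \<Rightarrow> 'a \<Rightarrow> 'q) \<Rightarrow> 'q \<Rightarrow> 'a list \<Rightarrow> 'q" where
  "run d q [] = q"
| "run d q (s # x) = run d (d q s) x"

definition W :: "'a set \<Rightarrow> nat \<Rightarrow> 'a list set" where
  "W S n = {w. set w \<subseteq> S \<and> length w = n}"

lemma W_finite: "finite S \<Longrightarrow> finite (W S n)"
  unfolding W_def by (rule finite_lists_length_eq)

lemma run_append: "run d q (x @ w) = run d (run d q x) w"
  by (induction x arbitrary: q) auto

lemma wp_append:
  "word_prob d p q (x @ w) = word_prob d p q x * word_prob d p (run d q x) w"
  by (induction x arbitrary: q) auto

lemma wp_nonneg: "word_prob d p q x \<ge> 0"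
  by (induction x arbitrary: q) auto

lemma wp_le1:
  assumes G: "pfsa S Q d p" shows "q \<in> Q \<Longrightarrow> set x \<subseteq> S \<Longrightarrow> word_prob d p q x \<le> 1"
proof (induction x arbitrary: q)
  case Nil then show ?case by simp
next
  case (Cons s x)
  show ?case
  proof (cases "p q s > 0")
    case True
    then have "d q s \<in> Q" using pfsaD(7)[OF G] Cons.prems by auto
    then have "word_prob d p (d q s) x \<le> 1" using Cons by auto
    moreover have "p q s \<le> 1" using p_le1[OF G] Cons.prems by auto
    ultimately show ?thesis using True wp_nonneg[of d p "d q s" x]
      by (simp add: mult_le_one)
  qed simp
qed

lemma wp_pos_run:
  assumes G: "pfsa S Q d p"
  shows "q \<in> Q \<Longrightarrow> set x \<subseteq> S \<Longrightarrow> word_prob d p q x > 0 \<Longrightarrow> run d q x \<in> Q"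
proof (induction x arbitrary: q)
  case Nil then show ?case by simp
next
  case (Cons s x)
  then have ps: "p q s > 0" by (auto split: if_splits)
  then have "d q s \<in> Q" using pfsaD(7)[OF G] Cons.prems by auto
  moreover have "word_prob d p (d q s) x > 0" using Cons.prems ps
    by (simp add: zero_less_mult_iff)
  ultimately show ?case using Cons by auto
qed

lemma W_split:
  assumes "finite S"
  shows "(\<Sum>z\<in>W S (n + L). f z) = (\<Sum>x\<in>W S n. \<Sum>w\<in>W S L. f (x @ w))"
proof -
  have inj: "inj_on (\<lambda>(x, w). x @ w) (W S n \<times> W S L)"
    unfolding W_def by (auto simp: inj_on_def)
  have img: "(\<lambda>(x, w). x @ w) ` (W S n \<times> W S L) = W S (n + L)"
  proof
    show "(\<lambda>(x, w). x @ w) ` (W S n \<times> W S L) \<subseteq> W S (n + L)" unfolding W_def by auto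
    show "W S (n + L) \<subseteq> (\<lambda>(x, w). x @ w) ` (W S n \<times> W S L)"
    proof
      fix z assume z: "z \<in> W S (n + L)"
      then have "(take n z, drop n z) \<in> W S n \<times> W S L" unfolding W_def
        by (auto dest: in_set_takeD in_set_dropD)
      then show "z \<in> (\<lambda>(x, w). x @ w) ` (W S n \<times> W S L)"
        by (metis (no_types, lifting) append_take_drop_id case_prod_conv image_eqI)
    qed
  qed
  have "(\<Sum>z\<in>W S (n + L). f z) = (\<Sum>xw\<in>W S n \<times> W S L. f ((\<lambda>(x, w). x @ w) xw))"
    using sum.reindex[OF inj, of f] img by simp
  also have "\<dots> = (\<Sum>x\<in>W S n. \<Sum>w\<in>W S L. f (x @ w))"
    by (simp add: sum.cartesian_product split_def)
  finally show ?thesis .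
qed

lemma W_0: "W S 0 = {[]}" unfolding W_def by auto

lemma W_1: "W S 1 = (\<lambda>s. [s]) ` S"
  unfolding W_def by (auto simp: length_Suc_conv)

lemma wp_sum1:
  assumes G: "pfsa S Q d p"
  shows "q \<in> Q \<Longrightarrow> (\<Sum>w\<in>W S L. word_prob d p q w) = 1"
proof (induction L)
  case 0 then show ?case by (simp add: W_0)
next
  case (Suc L)
  have fS: "finite S" using pfsaD[OF G] by auto
  have "(\<Sum>w\<in>W S (L + 1). word_prob d p q w) =
        (\<Sum>x\<in>W S L. \<Sum>w\<in>W S 1. word_prob d p q (x @ w))"
    by (rule W_split[OF fS])
  also have "\<dots> = (\<Sum>x\<in>W S L. word_prob d p q x)"
  proof (rule sum.cong[OF refl])
    fix x assume x: "x \<in> W S L"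
    show "(\<Sum>w\<in>W S 1. word_prob d p q (x @ w)) = word_prob d p q x"
    proof (cases "word_prob d p q x > 0")
      case True
      then have r: "run d q x \<in> Q" using wp_pos_run[OF G Suc.prems] x unfolding W_def by auto
      have "(\<Sum>w\<in>W S 1. word_prob d p q (x @ w)) =
            word_prob d p q x * (\<Sum>s\<in>S. word_prob d p (run d q x) [s])"
        unfolding W_1 wp_append
        by (subst sum.reindex) (auto simp: inj_on_def sum_distrib_left)
      also have "(\<Sum>s\<in>S. word_prob d p (run d q x) [s]) = (\<Sum>s\<in>S. p (run d q x) s)"
      proof (rule sum.cong[OF refl])
        fix s assume "s \<in> S"
        then show "word_prob d p (run d q x) [s] = p (run d q x) s"
          using pfsaD(5)[OF G r, of s] by (cases "p (run d q x) s > 0") auto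
      qed
      finally show ?thesis using pfsaD(6)[OF G r] by simp
    next
      case False
      then have "word_prob d p q x = 0" using wp_nonneg[of d p q x] by simp
      then show ?thesis by (simp add: wp_append)
    qed
  qed
  finally show ?case using Suc by simp
qed

lemma wp_sum_ext:
  assumes G: "pfsa S Q d p" and q: "q \<in> Q" and x: "set x \<subseteq> S"
  shows "(\<Sum>w\<in>W S L. word_prob d p q (x @ w)) = word_prob d p q x"
proof (cases "word_prob d p q x > 0")
  case True
  then have r: "run d q x \<in> Q" using wp_pos_run[OF G q x] by auto
  show ?thesis unfolding wp_append
    by (simp add: sum_distrib_left[symmetric] wp_sum1[OF G r])
next
  case False
  then have "word_prob d p q x = 0" using wp_nonneg[of d p q x] by simp
  then show ?thesis by (simp add: wp_append)
qed

lemma incr_identity: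
  fixes e :: "'w \<Rightarrow> 'q \<Rightarrow> real"
  assumes fA: "finite A" and fB: "finite B"
    and nn: "\<And>w q. w \<in> A \<Longrightarrow> q \<in> B \<Longrightarrow> e w q \<ge> 0"
    and a: "\<And>q. q \<in> B \<Longrightarrow> a q = (\<Sum>w\<in>A. e w q)"
    and R: "\<And>w. w \<in> A \<Longrightarrow> R w = (\<Sum>q\<in>B. e w q)"
    and T: "T = (\<Sum>q\<in>B. a q)" "T > 0"
  shows "(\<Sum>w\<in>A. (\<Sum>q\<in>B. (e w q)\<^sup>2) / R w) - (\<Sum>q\<in>B. (a q)\<^sup>2) / T
       = (\<Sum>w\<in>A. R w * (\<Sum>q\<in>B. (e w q / R w - a q / T)\<^sup>2))"
proof -
  have trm: "R w * (e w q / R w - a q / T)\<^sup>2 = (e w q)\<^sup>2 / R w - 2 * e w q * a q / T + R w * (a q)\<^sup>2 / T\<^sup>2"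
    if w: "w \<in> A" and q: "q \<in> B" for w q
  proof (cases "R w = 0")
    case True
    then have "e w q = 0"
      using sum_nonneg_eq_0_iff[OF fB, of "e w"] nn w q R[OF w] by auto
    then show ?thesis using True by simp
  next
    case False
    then show ?thesis using T(2) by (simp add: power2_eq_square field_simps)
  qed
  have "(\<Sum>w\<in>A. R w * (\<Sum>q\<in>B. (e w q / R w - a q / T)\<^sup>2))
      = (\<Sum>w\<in>A. \<Sum>q\<in>B. (e w q)\<^sup>2 / R w - 2 * e w q * a q / T + R w * (a q)\<^sup>2 / T\<^sup>2)"
    by (simp add: sum_distrib_left trm)
  also have "\<dots> = (\<Sum>w\<in>A. \<Sum>q\<in>B. (e w q)\<^sup>2 / R w) - (\<Sum>w\<in>A. \<Sum>q\<in>B. 2 * e w q * a q / T)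
                 + (\<Sum>w\<in>A. \<Sum>q\<in>B. R w * (a q)\<^sup>2 / T\<^sup>2)"
    by (simp add: sum.distrib sum_subtractf)
  also have "(\<Sum>w\<in>A. \<Sum>q\<in>B. 2 * e w q * a q / T) = 2 * (\<Sum>q\<in>B. (a q)\<^sup>2) / T"
  proof -
    have "(\<Sum>w\<in>A. \<Sum>q\<in>B. 2 * e w q * a q / T) = (\<Sum>q\<in>B. (2 * a q / T) * (\<Sum>w\<in>A. e w q))"
      by (subst sum.swap) (simp add: sum_distrib_left sum_divide_distrib mult.commute mult.left_commute)
    also have "\<dots> = (\<Sum>q\<in>B. 2 * (a q)\<^sup>2 / T)" using a by (intro sum.cong) (simp_all add: power2_eq_square)
    finally show ?thesis by (simp add: sum_divide_distrib sum_distrib_left)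
  qed
  also have "(\<Sum>w\<in>A. \<Sum>q\<in>B. R w * (a q)\<^sup>2 / T\<^sup>2) = (\<Sum>q\<in>B. (a q)\<^sup>2) / T"
  proof -
    have "(\<Sum>w\<in>A. R w) = T"
      using R T a by (simp add: sum.swap[of _ A B])
    have i: "\<And>w. (\<Sum>q\<in>B. R w * (a q)\<^sup>2 / T\<^sup>2) = R w * (\<Sum>q\<in>B. (a q)\<^sup>2) / T\<^sup>2"
      by (simp add: sum_distrib_left sum_divide_distrib)
    have "(\<Sum>w\<in>A. \<Sum>q\<in>B. R w * (a q)\<^sup>2 / T\<^sup>2) = (\<Sum>w\<in>A. R w) * (\<Sum>q\<in>B. (a q)\<^sup>2) / T\<^sup>2"
      unfolding i by (simp add: sum_distrib_right sum_divide_distrib)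
    also have "\<dots> = (\<Sum>q\<in>B. (a q)\<^sup>2) / T" using \<open>(\<Sum>w\<in>A. R w) = T\<close> T(2)
      by (simp add: power2_eq_square)
    finally show ?thesis .
  qed
  finally have "(\<Sum>w\<in>A. R w * (\<Sum>q\<in>B. (e w q / R w - a q / T)\<^sup>2)) =
     (\<Sum>w\<in>A. \<Sum>q\<in>B. (e w q)\<^sup>2 / R w) - 2 * (\<Sum>q\<in>B. (a q)\<^sup>2) / T + (\<Sum>q\<in>B. (a q)\<^sup>2) / T" .
  moreover have "\<And>w. (\<Sum>q\<in>B. (e w q)\<^sup>2 / R w) = (\<Sum>q\<in>B. (e w q)\<^sup>2) / R w"
    by (simp add: sum_divide_distrib)
  ultimately show ?thesis by simp
qed

lemma term_lb:
  fixes R T a m :: real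
  assumes "0 \<le> R" "R \<le> T" "T > 0" "a \<ge> 0" "R = 0 \<Longrightarrow> m = 0"
  shows "(a\<^sup>2 / T) * (m - R / T)\<^sup>2 \<le> R * (a * m / R - a / T)\<^sup>2"
proof (cases "R = 0")
  case True then show ?thesis using assms by simp
next
  case False
  then have Rp: "R > 0" using assms by simp
  define K where "K = a\<^sup>2 * (m * T - R)\<^sup>2"
  have K: "K \<ge> 0" unfolding K_def by simp
  have l: "(a\<^sup>2 / T) * (m - R / T)\<^sup>2 = K / T^3"
    unfolding K_def using assms(3) by (simp add: field_simps power2_eq_square power3_eq_cube)
  have r: "R * (a * m / R - a / T)\<^sup>2 = K / (R * T\<^sup>2)"
    unfolding K_def using assms(3) Rp by (simp add: field_simps power2_eq_square)
  have "R * T\<^sup>2 \<le> T^3" using assms(2,3) Rp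
    by (simp add: power2_eq_square power3_eq_cube mult_right_mono)
  moreover have "R * T\<^sup>2 > 0" using Rp assms(3) by simp
  ultimately have "K / T^3 \<le> K / (R * T\<^sup>2)" using K by (simp add: frac_le)
  then show ?thesis using l r by simp
qed

lemma sq_half: fixes u v f :: real shows "(u - v)\<^sup>2 / 2 \<le> (u - f)\<^sup>2 + (v - f)\<^sup>2"
proof -
  have "0 \<le> (u + v - 2 * f)\<^sup>2" by simp
  then show ?thesis by (simp add: power2_eq_square field_simps)
qed

definition mach :: "'a set \<Rightarrow> 'q set \<Rightarrow> ('q \<Rightarrow> 'a \<Rightarrow> 'q) \<Rightarrow> ('q \<Rightarrow> 'a \<Rightarrow> real) \<Rightarrow> ('q \<Rightarrow> real) \<Rightarrow> bool" where
  "mach S Q d p v \<longleftrightarrow> pfsa S Q d p \<and> (\<forall>q\<in>Q. 0 \<le> v q) \<and> sum v Q = 1"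

definition PP :: "'q set \<Rightarrow> ('q \<Rightarrow> 'a \<Rightarrow> 'q) \<Rightarrow> ('q \<Rightarrow> 'a \<Rightarrow> real) \<Rightarrow> ('q \<Rightarrow> real) \<Rightarrow> 'a list \<Rightarrow> real" where
  "PP Q d p v x = (\<Sum>q\<in>Q. v q * word_prob d p q x)"

definition Sq :: "'q set \<Rightarrow> ('q \<Rightarrow> 'a \<Rightarrow> 'q) \<Rightarrow> ('q \<Rightarrow> 'a \<Rightarrow> real) \<Rightarrow> ('q \<Rightarrow> real) \<Rightarrow> 'a list \<Rightarrow> real" where
  "Sq Q d p v x = (\<Sum>q\<in>Q. (v q * word_prob d p q x)\<^sup>2)"

definition En :: "'a set \<Rightarrow> 'q set \<Rightarrow> ('q \<Rightarrow> 'a \<Rightarrow> 'q) \<Rightarrow> ('q \<Rightarrow> 'a \<Rightarrow> real) \<Rightarrow> ('q \<Rightarrow> real) \<Rightarrow> nat \<Rightarrow> real" where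
  "En S Q d p v n = (\<Sum>x\<in>W S n. Sq Q d p v x / PP Q d p v x)"

definition Inc :: "'a set \<Rightarrow> 'q set \<Rightarrow> ('q \<Rightarrow> 'a \<Rightarrow> 'q) \<Rightarrow> ('q \<Rightarrow> 'a \<Rightarrow> real) \<Rightarrow> ('q \<Rightarrow> real) \<Rightarrow> nat \<Rightarrow> 'a list \<Rightarrow> real" where
  "Inc S Q d p v L x = (\<Sum>w\<in>W S L. Sq Q d p v (x @ w) / PP Q d p v (x @ w)) - Sq Q d p v x / PP Q d p v x"

context
  fixes S :: "'a set" and Q :: "'q set" and d p v
  assumes M: "mach S Q d p v"
begin

lemma G: "pfsa S Q d p" using M unfolding mach_def by simp
lemma vnn: "q \<in> Q \<Longrightarrow> 0 \<le> v q" using M unfolding mach_def by simp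
lemma vsum: "sum v Q = 1" using M unfolding mach_def by simp
lemma fQ: "finite Q" using pfsaD[OF G] by simp
lemma fS: "finite S" using pfsaD[OF G] by simp

lemma a_nn: "q \<in> Q \<Longrightarrow> 0 \<le> v q * word_prob d p q x"
  by (rule mult_nonneg_nonneg[OF vnn wp_nonneg])

lemma PP_nonneg: "PP Q d p v x \<ge> 0"
  unfolding PP_def by (rule sum_nonneg) (use a_nn in auto)

lemma a_le_PP: "q \<in> Q \<Longrightarrow> v q * word_prob d p q x \<le> PP Q d p v x"
  unfolding PP_def by (rule member_le_sum) (use a_nn fQ in auto)

lemma PP_ext: "set x \<subseteq> S \<Longrightarrow> (\<Sum>w\<in>W S L. PP Q d p v (x @ w)) = PP Q d p v x"
  unfolding PP_def
  by (subst sum.swap) (simp add: sum_distrib_left[symmetric] wp_sum_ext[OF G])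

lemma PP_sum: "(\<Sum>x\<in>W S n. PP Q d p v x) = 1"
  using PP_ext[of "[]" n] vsum by (simp add: PP_def)

lemma PP_ext_le: "set x \<subseteq> S \<Longrightarrow> w \<in> W S L \<Longrightarrow> PP Q d p v (x @ w) \<le> PP Q d p v x"
proof -
  assume x: "set x \<subseteq> S" and w: "w \<in> W S L"
  have "PP Q d p v (x @ w) \<le> (\<Sum>w\<in>W S L. PP Q d p v (x @ w))"
    by (rule member_le_sum) (use w W_finite[OF fS] PP_nonneg in auto)
  then show ?thesis using PP_ext[OF x] by simp
qed

lemma PP_zero: "PP Q d p v x = 0 \<Longrightarrow> q \<in> Q \<Longrightarrow> v q * word_prob d p q x = 0"
  using a_le_PP a_nn by (metis order_antisym)

lemma Sq_le: "Sq Q d p v x \<le> PP Q d p v x * PP Q d p v x"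
proof -
  have "Sq Q d p v x \<le> (\<Sum>q\<in>Q. (v q * word_prob d p q x) * PP Q d p v x)"
    unfolding Sq_def power2_eq_square
    by (rule sum_mono) (use a_nn a_le_PP in \<open>simp add: mult_left_mono\<close>)
  also have "\<dots> = PP Q d p v x * PP Q d p v x" by (simp add: PP_def sum_distrib_right)
  finally show ?thesis .
qed

lemma Sq_nonneg: "Sq Q d p v x \<ge> 0" unfolding Sq_def by (simp add: sum_nonneg)

lemma ratio_bounds: "0 \<le> Sq Q d p v x / PP Q d p v x" "Sq Q d p v x / PP Q d p v x \<le> PP Q d p v x"
proof -
  show "0 \<le> Sq Q d p v x / PP Q d p v x" using Sq_nonneg PP_nonneg by simp
  show "Sq Q d p v x / PP Q d p v x \<le> PP Q d p v x"
  proof (cases "PP Q d p v x = 0")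
    case True then show ?thesis by simp
  next
    case False
    then have "PP Q d p v x > 0" using PP_nonneg by (simp add: less_le)
    then show ?thesis using Sq_le by (simp add: divide_le_eq)
  qed
qed

lemma En_bounds: "0 \<le> En S Q d p v n" "En S Q d p v n \<le> 1"
proof -
  show "0 \<le> En S Q d p v n" unfolding En_def by (rule sum_nonneg) (use ratio_bounds in auto)
  have "En S Q d p v n \<le> (\<Sum>x\<in>W S n. PP Q d p v x)"
    unfolding En_def by (rule sum_mono) (use ratio_bounds in auto)
  then show "En S Q d p v n \<le> 1" using PP_sum by simp
qed

lemma En_split: "En S Q d p v (n + L) - En S Q d p v n = (\<Sum>x\<in>W S n. Inc S Q d p v L x)"
  unfolding En_def Inc_def W_split[OF fS] by (simp add: sum_subtractf)

lemma Inc_zero: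
  assumes x: "set x \<subseteq> S" and z: "PP Q d p v x = 0"
  shows "Inc S Q d p v L x = 0"
proof -
  have "\<And>w. Sq Q d p v (x @ w) = 0"
  proof -
    fix w
    have "v q * word_prob d p q (x @ w) = 0" if q: "q \<in> Q" for q
    proof -
      have "v q * word_prob d p q x = 0" using PP_zero[OF z q] .
      then show ?thesis by (simp add: wp_append mult.assoc[symmetric])
    qed
    then show "Sq Q d p v (x @ w) = 0" unfolding Sq_def by (intro sum.neutral) simp
  qed
  then show ?thesis unfolding Inc_def using z by simp
qed

lemma Inc_identity:
  assumes x: "set x \<subseteq> S" and pos: "PP Q d p v x > 0"
  shows "Inc S Q d p v L x = (\<Sum>w\<in>W S L. PP Q d p v (x @ w) *
     (\<Sum>q\<in>Q. (v q * word_prob d p q (x @ w) / PP Q d p v (x @ w) - v q * word_prob d p q x / PP Q d p v x)\<^sup>2))"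
  unfolding Inc_def Sq_def
proof (rule incr_identity[OF W_finite[OF fS] fQ])
  show "\<And>w q. w \<in> W S L \<Longrightarrow> q \<in> Q \<Longrightarrow> 0 \<le> v q * word_prob d p q (x @ w)" using a_nn by simp
  show "\<And>q. q \<in> Q \<Longrightarrow> v q * word_prob d p q x = (\<Sum>w\<in>W S L. v q * word_prob d p q (x @ w))"
    using wp_sum_ext[OF G _ x] by (simp add: sum_distrib_left[symmetric])
  show "\<And>w. w \<in> W S L \<Longrightarrow> PP Q d p v (x @ w) = (\<Sum>q\<in>Q. v q * word_prob d p q (x @ w))"
    unfolding PP_def ..
  show "PP Q d p v x = (\<Sum>q\<in>Q. v q * word_prob d p q x)" unfolding PP_def ..
  show "PP Q d p v x > 0" by fact
qed

lemma Inc_nonneg: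
  assumes x: "set x \<subseteq> S"
  shows "Inc S Q d p v L x \<ge> 0"
proof (cases "PP Q d p v x = 0")
  case True then show ?thesis using Inc_zero[OF x] by simp
next
  case False
  then have pos: "PP Q d p v x > 0" using PP_nonneg by (simp add: less_le)
  show ?thesis unfolding Inc_identity[OF x pos]
    by (intro sum_nonneg mult_nonneg_nonneg PP_nonneg) auto
qed

end

context
  fixes S :: "'a set" and Q :: "'q set" and d p v
  assumes M: "mach S Q d p v"
begin

lemma Inc_lb:
  assumes x: "set x \<subseteq> S" and pos: "PP Q d p v x > 0"
    and q1: "q1 \<in> Q" and q2: "q2 \<in> Q" and ne: "q1 \<noteq> q2" and th: "\<theta> > 0"
    and h1: "v q1 * word_prob d p q1 x \<ge> \<theta> * PP Q d p v x"
    and h2: "v q2 * word_prob d p q2 x \<ge> \<theta> * PP Q d p v x"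
  shows "\<theta>\<^sup>2 * PP Q d p v x / 2 * (\<Sum>w\<in>W S L. (word_prob d p (run d q1 x) w - word_prob d p (run d q2 x) w)\<^sup>2)
          \<le> Inc S Q d p v L x"
proof -
  let ?T = "PP Q d p v x"
  let ?R = "\<lambda>w. PP Q d p v (x @ w)"
  let ?a = "\<lambda>q. v q * word_prob d p q x"
  let ?m = "\<lambda>q w. word_prob d p (run d q x) w"
  let ?D = "\<lambda>w q. (v q * word_prob d p q (x @ w) / ?R w - ?a q / ?T)\<^sup>2"
  have e: "\<And>q w. v q * word_prob d p q (x @ w) = ?a q * ?m q w"
    by (simp add: wp_append mult.assoc)
  have one: "?R w * ?D w q \<ge> \<theta>\<^sup>2 * ?T * (?m q w - ?R w / ?T)\<^sup>2"
    if w: "w \<in> W S L" and q: "q \<in> Q" and hq: "?a q \<ge> \<theta> * ?T" for w q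
  proof -
    have "\<theta> * ?T > 0" using th pos by simp
    then have apos: "?a q > 0" using hq by linarith
    have R0: "?R w = 0 \<Longrightarrow> ?m q w = 0"
    proof -
      assume "?R w = 0"
      then have "v q * word_prob d p q (x @ w) = 0" using PP_zero[OF M _ q] by blast
      then have "?a q * ?m q w = 0" using e[of q w] by simp
      moreover have "?a q \<noteq> 0" using apos by linarith
      ultimately show "?m q w = 0" by simp
    qed
    have A: "(?a q)\<^sup>2 / ?T * (?m q w - ?R w / ?T)\<^sup>2 \<le> ?R w * (?a q * ?m q w / ?R w - ?a q / ?T)\<^sup>2"
      by (rule term_lb) (use PP_nonneg[OF M] PP_ext_le[OF M x w] pos a_nn[OF M q] R0 in auto)
    have B: "\<theta>\<^sup>2 * ?T \<le> (?a q)\<^sup>2 / ?T"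
    proof -
      have "(\<theta> * ?T)\<^sup>2 \<le> (?a q)\<^sup>2" using hq th pos by (intro power_mono) auto
      then have "(\<theta> * ?T)\<^sup>2 / ?T \<le> (?a q)\<^sup>2 / ?T" using pos by (intro divide_right_mono) auto
      moreover have "(\<theta> * ?T)\<^sup>2 / ?T = \<theta>\<^sup>2 * ?T" using pos by (simp add: power2_eq_square)
      ultimately show ?thesis by simp
    qed
    have C: "\<theta>\<^sup>2 * ?T * (?m q w - ?R w / ?T)\<^sup>2 \<le> (?a q)\<^sup>2 / ?T * (?m q w - ?R w / ?T)\<^sup>2"
      using B by (rule mult_right_mono) simp
    have Deq: "?D w q = (?a q * ?m q w / ?R w - ?a q / ?T)\<^sup>2" by (simp only: e)
    show ?thesis unfolding Deq using A C by (rule order_trans[rotated])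
  qed
  have "\<theta>\<^sup>2 * ?T / 2 * (\<Sum>w\<in>W S L. (?m q1 w - ?m q2 w)\<^sup>2) =
      (\<Sum>w\<in>W S L. \<theta>\<^sup>2 * ?T / 2 * (?m q1 w - ?m q2 w)\<^sup>2)"
    by (simp add: sum_distrib_left)
  also have "\<dots> \<le> (\<Sum>w\<in>W S L. ?R w * ?D w q1 + ?R w * ?D w q2)"
  proof (rule sum_mono)
    fix w assume w: "w \<in> W S L"
    have "\<theta>\<^sup>2 * ?T / 2 * (?m q1 w - ?m q2 w)\<^sup>2 =
          \<theta>\<^sup>2 * ?T * ((?m q1 w - ?m q2 w)\<^sup>2 / 2)" by simp
    also have "\<dots> \<le> \<theta>\<^sup>2 * ?T * ((?m q1 w - ?R w / ?T)\<^sup>2 + (?m q2 w - ?R w / ?T)\<^sup>2)"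
      using pos by (intro mult_left_mono sq_half) auto
    also have "\<dots> \<le> ?R w * ?D w q1 + ?R w * ?D w q2"
      using one[OF w q1 h1] one[OF w q2 h2] by (simp add: distrib_left)
    finally show "\<theta>\<^sup>2 * ?T / 2 * (?m q1 w - ?m q2 w)\<^sup>2 \<le> ?R w * ?D w q1 + ?R w * ?D w q2" .
  qed
  also have "\<dots> \<le> (\<Sum>w\<in>W S L. ?R w * (\<Sum>q\<in>Q. ?D w q))"
  proof (rule sum_mono)
    fix w assume w: "w \<in> W S L"
    have "(\<Sum>q\<in>{q1, q2}. ?D w q) \<le> (\<Sum>q\<in>Q. ?D w q)"
      by (rule sum_mono2) (use fQ[OF M] q1 q2 in simp_all)
    then have "?D w q1 + ?D w q2 \<le> (\<Sum>q\<in>Q. ?D w q)" using ne by simp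
    then show "?R w * ?D w q1 + ?R w * ?D w q2 \<le> ?R w * (\<Sum>q\<in>Q. ?D w q)"
      using mult_left_mono[OF _ PP_nonneg[OF M]] by (simp add: distrib_left[symmetric])
  qed
  also have "\<dots> = Inc S Q d p v L x"
    by (rule Inc_identity[OF M x pos, symmetric])
  finally show ?thesis .
qed

end

lemma sync_step:
  assumes M: "mach S Q d p v" and x: "set x \<subseteq> S" and pos: "PP Q d p v x > 0"
    and th: "\<theta> > 0" and small: "real (card Q) * \<theta> < 1"
    and heq: "\<forall>q1\<in>Q. \<forall>q2\<in>Q. v q1 * word_prob d p q1 x \<ge> \<theta> * PP Q d p v x \<longrightarrow>
                 v q2 * word_prob d p q2 x \<ge> \<theta> * PP Q d p v x \<longrightarrow>
                 (\<forall>w. set w \<subseteq> S \<longrightarrow> word_prob d p (run d q1 x) w = word_prob d p (run d q2 x) w)"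
  shows "\<exists>r\<in>Q. \<forall>w. set w \<subseteq> S \<longrightarrow>
           \<bar>PP Q d p v (x @ w) - PP Q d p v x * word_prob d p r w\<bar> \<le> real (card Q) * \<theta> * PP Q d p v x"
proof -
  let ?T = "PP Q d p v x"
  let ?a = "\<lambda>q. v q * word_prob d p q x"
  have G: "pfsa S Q d p" and fQ: "finite Q" and neQ: "Q \<noteq> {}"
    using M pfsaD unfolding mach_def by auto
  have "\<exists>q1\<in>Q. ?a q1 \<ge> \<theta> * ?T"
  proof (rule ccontr)
    assume "\<not> ?thesis"
    then have lt: "\<And>q. q \<in> Q \<Longrightarrow> ?a q < \<theta> * ?T" by auto
    have "?T = (\<Sum>q\<in>Q. ?a q)" unfolding PP_def ..
    also have "\<dots> < (\<Sum>q\<in>Q. \<theta> * ?T)" by (rule sum_strict_mono) (use fQ neQ lt in auto)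
    also have "\<dots> = real (card Q) * \<theta> * ?T" by simp
    also have "\<dots> \<le> 1 * ?T" using small pos by (intro mult_right_mono) auto
    finally show False by simp
  qed
  then obtain q1 where q1: "q1 \<in> Q" "?a q1 \<ge> \<theta> * ?T" by blast
  have "\<theta> * ?T > 0" using th pos by simp
  then have "?a q1 > 0" using q1(2) by linarith
  then have wq1: "word_prob d p q1 x > 0" using vnn[OF M q1(1)] wp_nonneg[of d p q1 x]
    by (simp add: zero_less_mult_iff)
  define r where "r = run d q1 x"
  have rQ: "r \<in> Q" unfolding r_def by (rule wp_pos_run[OF G q1(1) x wq1])
  show ?thesis
  proof (intro bexI[OF _ rQ] allI impI)
    fix w assume w: "set w \<subseteq> S"
    let ?m = "\<lambda>q. word_prob d p (run d q x) w"
    have eq: "PP Q d p v (x @ w) - ?T * word_prob d p r w = (\<Sum>q\<in>Q. ?a q * (?m q - word_prob d p r w))"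
      unfolding PP_def by (simp add: wp_append sum_distrib_right sum_distrib_left sum_subtractf algebra_simps)
    have "\<bar>PP Q d p v (x @ w) - ?T * word_prob d p r w\<bar> = \<bar>\<Sum>q\<in>Q. ?a q * (?m q - word_prob d p r w)\<bar>"
      by (simp only: eq)
    also have "\<dots> \<le> (\<Sum>q\<in>Q. \<bar>?a q * (?m q - word_prob d p r w)\<bar>)" by (rule sum_abs)
    also have "\<dots> \<le> (\<Sum>q\<in>Q. \<theta> * ?T)"
    proof (rule sum_mono)
      fix q assume q: "q \<in> Q"
      show "\<bar>?a q * (?m q - word_prob d p r w)\<bar> \<le> \<theta> * ?T"
      proof (cases "?a q \<ge> \<theta> * ?T")
        case True
        have "word_prob d p (run d q1 x) w = ?m q" by (rule heq[rule_format, OF q1(1) q q1(2) True w])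
        then have "?m q = word_prob d p r w" unfolding r_def by simp
        then show ?thesis using th pos by simp
      next
        case False
        show ?thesis
        proof (cases "word_prob d p q x > 0")
          case True
          then have "run d q x \<in> Q" using wp_pos_run[OF G q x] by simp
          then have "?m q \<le> 1" "word_prob d p r w \<le> 1"
            using wp_le1[OF G _ w] rQ by auto
          moreover have "?m q \<ge> 0" "word_prob d p r w \<ge> 0" by (rule wp_nonneg)+
          ultimately have "\<bar>?m q - word_prob d p r w\<bar> \<le> 1" by linarith
          then have "\<bar>?a q * (?m q - word_prob d p r w)\<bar> \<le> ?a q * 1"
          proof -
            have "\<bar>?a q * (?m q - word_prob d p r w)\<bar> = ?a q * \<bar>?m q - word_prob d p r w\<bar>"
              by (subst abs_mult) (simp only: abs_of_nonneg[OF a_nn[OF M q, of x]])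
            also have "\<dots> \<le> ?a q * 1"
              using a_nn[OF M q, of x] \<open>\<bar>?m q - word_prob d p r w\<bar> \<le> 1\<close> by (rule mult_left_mono[rotated])
            finally show ?thesis .
          qed
          then show ?thesis using False by simp
        next
          case False
          then have "word_prob d p q x = 0" using wp_nonneg[of d p q x] by simp
          then show ?thesis using th pos by simp
        qed
      qed
    qed
    also have "\<dots> = real (card Q) * \<theta> * ?T" by simp
    finally show "\<bar>PP Q d p v (x @ w) - ?T * word_prob d p r w\<bar> \<le> real (card Q) * \<theta> * ?T" .
  qed
qed

lemma finite_pos_lb:
  fixes f :: "'b \<Rightarrow> real"
  assumes "finite A" "\<forall>a\<in>A. 0 < f a"
  shows "\<exists>D>0. \<forall>a\<in>A. D \<le> f a"
proof (cases "A = {}")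
  case True then show ?thesis by (intro exI[of _ 1]) auto
next
  case False
  have "Min (f ` A) \<in> f ` A" using assms False by (intro Min_in) auto
  then have "Min (f ` A) > 0" using assms by auto
  moreover have "\<forall>a\<in>A. Min (f ` A) \<le> f a" using assms by auto
  ultimately show ?thesis by blast
qed

lemma differ_ext:
  assumes G: "pfsa S Q d p" and r: "r1 \<in> Q" "r2 \<in> Q" and w0: "set w0 \<subseteq> S"
    and ne: "word_prob d p r1 w0 \<noteq> word_prob d p r2 w0"
  shows "\<exists>w\<in>W S (length w0 + k). word_prob d p r1 w \<noteq> word_prob d p r2 w"
proof (rule ccontr)
  assume "\<not> ?thesis"
  then have eq: "\<forall>w\<in>W S (length w0 + k). word_prob d p r1 w = word_prob d p r2 w" by blast
  have "\<And>u. u \<in> W S k \<Longrightarrow> w0 @ u \<in> W S (length w0 + k)" using w0 unfolding W_def by auto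
  then have "(\<Sum>u\<in>W S k. word_prob d p r1 (w0 @ u)) = (\<Sum>u\<in>W S k. word_prob d p r2 (w0 @ u))"
    using eq by (intro sum.cong) auto
  then show False using wp_sum_ext[OF G r(1) w0] wp_sum_ext[OF G r(2) w0] ne by simp
qed

definition differ :: "'a set \<Rightarrow> ('q \<Rightarrow> 'a \<Rightarrow> 'q) \<Rightarrow> ('q \<Rightarrow> 'a \<Rightarrow> real) \<Rightarrow> 'q \<Rightarrow> 'q \<Rightarrow> bool" where
  "differ S d p r1 r2 \<longleftrightarrow> (\<exists>w. set w \<subseteq> S \<and> word_prob d p r1 w \<noteq> word_prob d p r2 w)"

lemma get_L:
  assumes G: "pfsa S Q d p"
  shows "\<exists>L0. \<forall>L\<ge>L0. \<forall>r1\<in>Q. \<forall>r2\<in>Q. differ S d p r1 r2 \<longrightarrow>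
            (\<exists>w\<in>W S L. word_prob d p r1 w \<noteq> word_prob d p r2 w)"
proof -
  define Dp where "Dp = {(r1, r2). r1 \<in> Q \<and> r2 \<in> Q \<and> differ S d p r1 r2}"
  define wit where "wit pr = (SOME w. set w \<subseteq> S \<and> word_prob d p (fst pr) w \<noteq> word_prob d p (snd pr) w)" for pr
  have fD: "finite Dp"
    by (rule finite_subset[of _ "Q \<times> Q"]) (use pfsaD(3)[OF G] in \<open>auto simp: Dp_def\<close>)
  have wit: "set (wit pr) \<subseteq> S \<and> word_prob d p (fst pr) (wit pr) \<noteq> word_prob d p (snd pr) (wit pr)"
    if "pr \<in> Dp" for pr
  proof -
    have ex: "\<exists>w. set w \<subseteq> S \<and> word_prob d p (fst pr) w \<noteq> word_prob d p (snd pr) w"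
      using that unfolding Dp_def differ_def by auto
    show ?thesis using someI_ex[OF ex] unfolding wit_def .
  qed
  define L0 where "L0 = (\<Sum>pr\<in>Dp. length (wit pr))"
  show ?thesis
  proof (intro exI[of _ L0] allI impI ballI)
    fix L r1 r2 assume L: "L0 \<le> L" and r: "r1 \<in> Q" "r2 \<in> Q" and df: "differ S d p r1 r2"
    then have pr: "(r1, r2) \<in> Dp" unfolding Dp_def by simp
    have "length (wit (r1, r2)) \<le> L0" unfolding L0_def
      by (rule member_le_sum) (use pr fD in auto)
    then obtain k where k: "L = length (wit (r1, r2)) + k" using L le_Suc_ex le_trans by blast
    show "\<exists>w\<in>W S L. word_prob d p r1 w \<noteq> word_prob d p r2 w"
      unfolding k using differ_ext[OF G r, of "wit (r1, r2)" k] wit[OF pr] by simp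
  qed
qed

lemma get_D:
  assumes G: "pfsa S Q d p"
    and L: "\<forall>r1\<in>Q. \<forall>r2\<in>Q. differ S d p r1 r2 \<longrightarrow> (\<exists>w\<in>W S L. word_prob d p r1 w \<noteq> word_prob d p r2 w)"
  shows "\<exists>D>0. \<forall>r1\<in>Q. \<forall>r2\<in>Q. differ S d p r1 r2 \<longrightarrow>
            D \<le> (\<Sum>w\<in>W S L. (word_prob d p r1 w - word_prob d p r2 w)\<^sup>2)"
proof -
  define Dp where "Dp = {(r1, r2). r1 \<in> Q \<and> r2 \<in> Q \<and> differ S d p r1 r2}"
  have fD: "finite Dp"
    by (rule finite_subset[of _ "Q \<times> Q"]) (use pfsaD(3)[OF G] in \<open>auto simp: Dp_def\<close>)
  have fW: "finite (W S L)" using W_finite pfsaD(1)[OF G] by blast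
  have "\<forall>pr\<in>Dp. 0 < (\<Sum>w\<in>W S L. (word_prob d p (fst pr) w - word_prob d p (snd pr) w)\<^sup>2)"
  proof
    fix pr assume pr: "pr \<in> Dp"
    then have "fst pr \<in> Q" "snd pr \<in> Q" "differ S d p (fst pr) (snd pr)" unfolding Dp_def by auto
    then obtain w where w: "w \<in> W S L" "word_prob d p (fst pr) w \<noteq> word_prob d p (snd pr) w"
      using L by blast
    have "(word_prob d p (fst pr) w - word_prob d p (snd pr) w)\<^sup>2 \<le>
          (\<Sum>w\<in>W S L. (word_prob d p (fst pr) w - word_prob d p (snd pr) w)\<^sup>2)"
      by (rule member_le_sum) (use w fW in auto)
    moreover have "(word_prob d p (fst pr) w - word_prob d p (snd pr) w)\<^sup>2 > 0" using w by simp
    ultimately show "0 < (\<Sum>w\<in>W S L. (word_prob d p (fst pr) w - word_prob d p (snd pr) w)\<^sup>2)" by linarith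
  qed
  from finite_pos_lb[OF fD this] obtain D where D: "D > 0"
    "\<forall>pr\<in>Dp. D \<le> (\<Sum>w\<in>W S L. (word_prob d p (fst pr) w - word_prob d p (snd pr) w)\<^sup>2)" by blast
  show ?thesis using D unfolding Dp_def by (intro exI[of _ D]) auto
qed

lemma get_gap:
  assumes fQ: "finite Q" and fQ': "finite Q'"
    and nm: "\<forall>r\<in>Q. \<forall>r'\<in>Q'. \<exists>w. set w \<subseteq> S \<and> word_prob d p r w \<noteq> word_prob d' p' r' w"
  shows "\<exists>\<gamma>>0. \<forall>r\<in>Q. \<forall>r'\<in>Q'. \<exists>w. set w \<subseteq> S \<and> \<gamma> \<le> \<bar>word_prob d p r w - word_prob d' p' r' w\<bar>"
proof -
  define wit where "wit pr = (SOME w. set w \<subseteq> S \<and> word_prob d p (fst pr) w \<noteq> word_prob d' p' (snd pr) w)" for pr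
  have wit: "set (wit pr) \<subseteq> S \<and> word_prob d p (fst pr) (wit pr) \<noteq> word_prob d' p' (snd pr) (wit pr)"
    if "pr \<in> Q \<times> Q'" for pr
  proof -
    have ex: "\<exists>w. set w \<subseteq> S \<and> word_prob d p (fst pr) w \<noteq> word_prob d' p' (snd pr) w"
      using that nm by (cases pr) auto
    show ?thesis using someI_ex[OF ex] unfolding wit_def .
  qed
  have "\<forall>pr\<in>Q \<times> Q'. 0 < \<bar>word_prob d p (fst pr) (wit pr) - word_prob d' p' (snd pr) (wit pr)\<bar>"
    using wit by auto
  from finite_pos_lb[OF finite_cartesian_product[OF fQ fQ'] this] obtain g where g: "g > 0"
    "\<forall>pr\<in>Q \<times> Q'. g \<le> \<bar>word_prob d p (fst pr) (wit pr) - word_prob d' p' (snd pr) (wit pr)\<bar>"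
    by blast
  show ?thesis
  proof (intro exI[of _ g] conjI ballI)
    fix r r' assume "r \<in> Q" "r' \<in> Q'"
    then show "\<exists>w. set w \<subseteq> S \<and> g \<le> \<bar>word_prob d p r w - word_prob d' p' r' w\<bar>"
      using wit[of "(r, r')"] g(2) by (intro exI[of _ "wit (r, r')"]) auto
  qed (use g in simp)
qed

lemma energy_small:
  fixes f :: "nat \<Rightarrow> real"
  assumes b: "\<And>n. 0 \<le> f n" "\<And>n. f n \<le> B" and e: "\<epsilon> > 0"
  shows "\<exists>n. f (n + L) - f n < \<epsilon>"
proof (rule ccontr)
  assume neg: "\<not> ?thesis"
  have st: "f (n + L) \<ge> f n + \<epsilon>" for n
  proof -
    have "\<not> (f (n + L) - f n < \<epsilon>)" using neg by blast
    then show ?thesis by linarith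
  qed
  have ind: "f (k * L) \<ge> real k * \<epsilon>" for k
  proof (induction k)
    case 0 then show ?case using b by simp
  next
    case (Suc k)
    have "f (Suc k * L) = f (k * L + L)" by (simp add: add.commute)
    then show ?case using st[of "k * L"] Suc by (simp add: algebra_simps)
  qed
  obtain k :: nat where k: "real k > B / \<epsilon>" using reals_Archimedean2 by blast
  then have "real k * \<epsilon> > B" using e by (simp add: field_simps)
  then show False using ind[of k] b(2)[of "k * L"] by simp
qed

lemma exists_below:
  fixes f g :: "'b \<Rightarrow> real"
  assumes "finite A" "(\<Sum>x\<in>A. f x) < (\<Sum>x\<in>A. g x)"
  shows "\<exists>x\<in>A. f x < g x"
proof (rule ccontr)
  assume "\<not> ?thesis"
  then have "(\<Sum>x\<in>A. g x) \<le> (\<Sum>x\<in>A. f x)" by (intro sum_mono) (simp add: not_less)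
  then show False using assms by simp
qed

lemma heavy_eq:
  assumes M: "mach S Q d p v" and x: "set x \<subseteq> S" and pos: "PP Q d p v x > 0"
    and th: "\<theta> > 0"
    and hD: "\<forall>r1\<in>Q. \<forall>r2\<in>Q. differ S d p r1 r2 \<longrightarrow>
            D \<le> (\<Sum>w\<in>W S L. (word_prob d p r1 w - word_prob d p r2 w)\<^sup>2)"
    and inc: "Inc S Q d p v L x < \<theta>\<^sup>2 * D / 2 * PP Q d p v x"
  shows "\<forall>q1\<in>Q. \<forall>q2\<in>Q. v q1 * word_prob d p q1 x \<ge> \<theta> * PP Q d p v x \<longrightarrow>
                 v q2 * word_prob d p q2 x \<ge> \<theta> * PP Q d p v x \<longrightarrow>
                 (\<forall>w. set w \<subseteq> S \<longrightarrow> word_prob d p (run d q1 x) w = word_prob d p (run d q2 x) w)"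
proof (intro ballI impI allI)
  fix q1 q2 w
  assume q1: "q1 \<in> Q" and q2: "q2 \<in> Q"
    and h1: "v q1 * word_prob d p q1 x \<ge> \<theta> * PP Q d p v x"
    and h2: "v q2 * word_prob d p q2 x \<ge> \<theta> * PP Q d p v x"
    and w: "set w \<subseteq> S"
  have G: "pfsa S Q d p" using M unfolding mach_def by simp
  show "word_prob d p (run d q1 x) w = word_prob d p (run d q2 x) w"
  proof (rule ccontr)
    assume ne: "word_prob d p (run d q1 x) w \<noteq> word_prob d p (run d q2 x) w"
    then have qne: "q1 \<noteq> q2" by auto
    have tp: "\<theta> * PP Q d p v x > 0" using th pos by simp
    have r1: "run d q1 x \<in> Q"
    proof -
      have "v q1 * word_prob d p q1 x > 0" using h1 tp by linarith
      then have "word_prob d p q1 x > 0" using vnn[OF M q1] wp_nonneg[of d p q1 x]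
        by (simp add: zero_less_mult_iff)
      then show ?thesis using wp_pos_run[OF G q1 x] by simp
    qed
    have r2: "run d q2 x \<in> Q"
    proof -
      have "v q2 * word_prob d p q2 x > 0" using h2 tp by linarith
      then have "word_prob d p q2 x > 0" using vnn[OF M q2] wp_nonneg[of d p q2 x]
        by (simp add: zero_less_mult_iff)
      then show ?thesis using wp_pos_run[OF G q2 x] by simp
    qed
    have df: "differ S d p (run d q1 x) (run d q2 x)" unfolding differ_def using w ne by blast
    have Dle: "D \<le> (\<Sum>w\<in>W S L. (word_prob d p (run d q1 x) w - word_prob d p (run d q2 x) w)\<^sup>2)"
      using hD r1 r2 df by blast
    have "\<theta>\<^sup>2 * D / 2 * PP Q d p v x = \<theta>\<^sup>2 * PP Q d p v x / 2 * D" by simp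
    also have "\<dots> \<le> \<theta>\<^sup>2 * PP Q d p v x / 2 *
        (\<Sum>w\<in>W S L. (word_prob d p (run d q1 x) w - word_prob d p (run d q2 x) w)\<^sup>2)"
      using Dle pos by (intro mult_left_mono) auto
    also have "\<dots> \<le> Inc S Q d p v L x"
      by (rule Inc_lb[OF M x pos q1 q2 qne th h1 h2])
    finally show False using inc by simp
  qed
qed

lemma sync_main:
  assumes M1: "mach S Q d p v" and M2: "mach S Q' d' p' v'"
    and same: "\<forall>x. set x \<subseteq> S \<longrightarrow> PP Q d p v x = PP Q' d' p' v' x"
  shows "\<exists>r\<in>Q. \<exists>r'\<in>Q'. \<forall>w. set w \<subseteq> S \<longrightarrow> word_prob d p r w = word_prob d' p' r' w"
proof (rule ccontr)
  assume neg: "\<not> ?thesis"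
  then have nm: "\<forall>r\<in>Q. \<forall>r'\<in>Q'. \<exists>w. set w \<subseteq> S \<and> word_prob d p r w \<noteq> word_prob d' p' r' w"
    by blast
  have G1: "pfsa S Q d p" using M1 unfolding mach_def by simp
  have G2: "pfsa S Q' d' p'" using M2 unfolding mach_def by simp
  have fQ1: "finite Q" and fQ2: "finite Q'" and fS: "finite S" using pfsaD G1 G2 by auto
  obtain \<gamma> where g: "\<gamma> > 0"
    and gap: "\<forall>r\<in>Q. \<forall>r'\<in>Q'. \<exists>w. set w \<subseteq> S \<and> \<gamma> \<le> \<bar>word_prob d p r w - word_prob d' p' r' w\<bar>"
    using get_gap[OF fQ1 fQ2 nm] by blast
  obtain L1 where L1: "\<forall>L\<ge>L1. \<forall>r1\<in>Q. \<forall>r2\<in>Q. differ S d p r1 r2 \<longrightarrow>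
            (\<exists>w\<in>W S L. word_prob d p r1 w \<noteq> word_prob d p r2 w)" using get_L[OF G1] by blast
  obtain L2 where L2: "\<forall>L\<ge>L2. \<forall>r1\<in>Q'. \<forall>r2\<in>Q'. differ S d' p' r1 r2 \<longrightarrow>
            (\<exists>w\<in>W S L. word_prob d' p' r1 w \<noteq> word_prob d' p' r2 w)" using get_L[OF G2] by blast
  define L where "L = max L1 L2"
  have hL1: "\<forall>r1\<in>Q. \<forall>r2\<in>Q. differ S d p r1 r2 \<longrightarrow>
            (\<exists>w\<in>W S L. word_prob d p r1 w \<noteq> word_prob d p r2 w)" using L1 L_def by simp
  have hL2: "\<forall>r1\<in>Q'. \<forall>r2\<in>Q'. differ S d' p' r1 r2 \<longrightarrow>
            (\<exists>w\<in>W S L. word_prob d' p' r1 w \<noteq> word_prob d' p' r2 w)" using L2 L_def by simp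
  obtain D1 where D1: "D1 > 0" "\<forall>r1\<in>Q. \<forall>r2\<in>Q. differ S d p r1 r2 \<longrightarrow>
            D1 \<le> (\<Sum>w\<in>W S L. (word_prob d p r1 w - word_prob d p r2 w)\<^sup>2)"
    using get_D[OF G1 hL1] by blast
  obtain D2 where D2: "D2 > 0" "\<forall>r1\<in>Q'. \<forall>r2\<in>Q'. differ S d' p' r1 r2 \<longrightarrow>
            D2 \<le> (\<Sum>w\<in>W S L. (word_prob d' p' r1 w - word_prob d' p' r2 w)\<^sup>2)"
    using get_D[OF G2 hL2] by blast
  define D where "D = min D1 D2"
  have Dpos: "D > 0" using D1 D2 D_def by simp
  have hD1: "\<forall>r1\<in>Q. \<forall>r2\<in>Q. differ S d p r1 r2 \<longrightarrow>
            D \<le> (\<Sum>w\<in>W S L. (word_prob d p r1 w - word_prob d p r2 w)\<^sup>2)"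
    using D1 D_def by force
  have hD2: "\<forall>r1\<in>Q'. \<forall>r2\<in>Q'. differ S d' p' r1 r2 \<longrightarrow>
            D \<le> (\<Sum>w\<in>W S L. (word_prob d' p' r1 w - word_prob d' p' r2 w)\<^sup>2)"
    using D2 D_def by force
  define N where "N = real (card Q) + real (card Q')"
  define m where "m = min \<gamma> 1"
  define \<theta> where "\<theta> = m / (2 * (N + 1))"
  have N0: "N \<ge> 0" unfolding N_def by simp
  have m: "m > 0" "m \<le> 1" "m \<le> \<gamma>" using g unfolding m_def by auto
  have th: "\<theta> > 0" unfolding \<theta>_def using m N0 by simp
  have Nth: "N * \<theta> < m"
  proof -
    have "N * \<theta> = m * (N / (2 * (N + 1)))" unfolding \<theta>_def by simp
    also have "N / (2 * (N + 1)) < 1" using N0 by (simp add: field_simps)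
    then have "m * (N / (2 * (N + 1))) < m * 1" using m by (intro mult_strict_left_mono) auto
    finally show ?thesis by simp
  qed
  have small1: "real (card Q) * \<theta> < 1"
  proof -
    have "real (card Q) * \<theta> \<le> N * \<theta>" unfolding N_def using th by (intro mult_right_mono) auto
    then show ?thesis using Nth m by linarith
  qed
  have small2: "real (card Q') * \<theta> < 1"
  proof -
    have "real (card Q') * \<theta> \<le> N * \<theta>" unfolding N_def using th by (intro mult_right_mono) auto
    then show ?thesis using Nth m by linarith
  qed
  define \<epsilon> where "\<epsilon> = \<theta>\<^sup>2 * D / 2"
  have eps: "\<epsilon> > 0" unfolding \<epsilon>_def using th Dpos by simp
  define f where "f n = En S Q d p v n + En S Q' d' p' v' n" for n
  have fb0: "0 \<le> f n" and fb1: "f n \<le> 2" for n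
  proof -
    have "0 \<le> En S Q d p v n" "En S Q d p v n \<le> 1" "0 \<le> En S Q' d' p' v' n" "En S Q' d' p' v' n \<le> 1"
      using En_bounds[OF M1] En_bounds[OF M2] by auto
    then show "0 \<le> f n" "f n \<le> 2" unfolding f_def by linarith+
  qed
  obtain n where n: "f (n + L) - f n < \<epsilon>" using energy_small[of f 2 \<epsilon> L, OF fb0 fb1 eps] by blast
  have "f (n + L) - f n = (\<Sum>x\<in>W S n. Inc S Q d p v L x + Inc S Q' d' p' v' L x)"
    unfolding f_def using En_split[OF M1, of n L] En_split[OF M2, of n L]
    by (simp add: sum.distrib)
  moreover have "(\<Sum>x\<in>W S n. \<epsilon> * PP Q d p v x) = \<epsilon>"
    using PP_sum[OF M1] by (simp add: sum_distrib_left[symmetric])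
  ultimately have "(\<Sum>x\<in>W S n. Inc S Q d p v L x + Inc S Q' d' p' v' L x) < (\<Sum>x\<in>W S n. \<epsilon> * PP Q d p v x)"
    using n by simp
  then obtain x where xW: "x \<in> W S n"
    and xi: "Inc S Q d p v L x + Inc S Q' d' p' v' L x < \<epsilon> * PP Q d p v x"
    using exists_below[OF W_finite[OF fS]] by blast
  have x: "set x \<subseteq> S" using xW unfolding W_def by simp
  have same_x: "PP Q' d' p' v' x = PP Q d p v x" using same x by simp
  have i1: "Inc S Q d p v L x \<ge> 0" by (rule Inc_nonneg[OF M1 x])
  have i2: "Inc S Q' d' p' v' L x \<ge> 0" by (rule Inc_nonneg[OF M2 x])
  have pos: "PP Q d p v x > 0"
  proof (rule ccontr)
    assume "\<not> PP Q d p v x > 0"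
    then have z: "PP Q d p v x = 0" using PP_nonneg[OF M1, of x] by simp
    then have "PP Q' d' p' v' x = 0" using same_x by simp
    then have "Inc S Q d p v L x = 0" "Inc S Q' d' p' v' L x = 0"
      using Inc_zero[OF M1 x z] Inc_zero[OF M2 x] by auto
    then show False using xi z by simp
  qed
  have pos2: "PP Q' d' p' v' x > 0" using pos same_x by simp
  have inc1: "Inc S Q d p v L x < \<theta>\<^sup>2 * D / 2 * PP Q d p v x" using xi i2 unfolding \<epsilon>_def by simp
  have inc2: "Inc S Q' d' p' v' L x < \<theta>\<^sup>2 * D / 2 * PP Q' d' p' v' x"
    using xi i1 same_x unfolding \<epsilon>_def by simp
  obtain r where r: "r \<in> Q" and hr: "\<forall>w. set w \<subseteq> S \<longrightarrow>
           \<bar>PP Q d p v (x @ w) - PP Q d p v x * word_prob d p r w\<bar> \<le> real (card Q) * \<theta> * PP Q d p v x"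
    using sync_step[OF M1 x pos th small1 heavy_eq[OF M1 x pos th hD1 inc1]] by blast
  obtain r' where r': "r' \<in> Q'" and hr': "\<forall>w. set w \<subseteq> S \<longrightarrow>
           \<bar>PP Q' d' p' v' (x @ w) - PP Q' d' p' v' x * word_prob d' p' r' w\<bar> \<le> real (card Q') * \<theta> * PP Q' d' p' v' x"
    using sync_step[OF M2 x pos2 th small2 heavy_eq[OF M2 x pos2 th hD2 inc2]] by blast
  obtain w where w: "set w \<subseteq> S" and gw: "\<gamma> \<le> \<bar>word_prob d p r w - word_prob d' p' r' w\<bar>"
    using gap r r' by blast
  let ?T = "PP Q d p v x"
  have e1: "\<bar>PP Q d p v (x @ w) - ?T * word_prob d p r w\<bar> \<le> real (card Q) * \<theta> * ?T"
    using hr w by blast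
  have e2: "\<bar>PP Q d p v (x @ w) - ?T * word_prob d' p' r' w\<bar> \<le> real (card Q') * \<theta> * ?T"
    using hr' w same_x same[rule_format, of "x @ w"] x by simp
  have "?T * \<bar>word_prob d p r w - word_prob d' p' r' w\<bar> = \<bar>?T * word_prob d p r w - ?T * word_prob d' p' r' w\<bar>"
    by (simp only: right_diff_distrib[symmetric] abs_mult abs_of_pos[OF pos])
  also have "\<dots> \<le> real (card Q) * \<theta> * ?T + real (card Q') * \<theta> * ?T"
    using e1 e2 by linarith
  also have "\<dots> = (N * \<theta>) * ?T" unfolding N_def by (simp add: algebra_simps)
  finally have "?T * \<bar>word_prob d p r w - word_prob d' p' r' w\<bar> \<le> ?T * (N * \<theta>)" by (simp add: mult.commute)
  then have "\<bar>word_prob d p r w - word_prob d' p' r' w\<bar> \<le> N * \<theta>" using pos by simp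
  then show False using gw Nth m by linarith
qed

lemma mach_stationary:
  assumes G: "pfsa S Q d p" shows "mach S Q d p (stationary S Q d p)"
  using stationary_is[OF G] G unfolding mach_def is_stationary_def by auto

lemma PP_process: "process_prob S Q d p x = PP Q d p (stationary S Q d p) x"
  unfolding process_prob_def PP_def ..

lemma wp_single:
  assumes G: "pfsa S Q d p" and q: "q \<in> Q" and s: "s \<in> S"
  shows "word_prob d p q [s] = p q s"
  using pfsaD(5)[OF G q s] by (cases "p q s > 0") auto

lemma match_one:
  assumes G1: "pfsa S Q d p" and G2: "pfsa S Q' d' p'" and y: "y \<in> Q" and y': "y' \<in> Q'"
    and eq: "\<forall>w. set w \<subseteq> S \<longrightarrow> word_prob d p y w = word_prob d' p' y' w"
    and s: "s \<in> S" and ps: "p y s > 0"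
  shows "p' y' s = p y s \<and> d' y' s \<in> Q' \<and>
         (\<forall>w. set w \<subseteq> S \<longrightarrow> word_prob d p (d y s) w = word_prob d' p' (d' y' s) w)"
proof -
  have "word_prob d p y [s] = word_prob d' p' y' [s]" using eq s by (simp del: word_prob.simps)
  then have pe: "p' y' s = p y s" using wp_single[OF G1 y s] wp_single[OF G2 y' s] by simp
  then have ps': "p' y' s > 0" using ps by simp
  have "\<forall>w. set w \<subseteq> S \<longrightarrow> word_prob d p (d y s) w = word_prob d' p' (d' y' s) w"
  proof (intro allI impI)
    fix w assume w: "set w \<subseteq> S"
    have "word_prob d p y (s # w) = word_prob d' p' y' (s # w)" by (rule eq[rule_format]) (use s w in simp)
    then have "p y s * word_prob d p (d y s) w = p y s * word_prob d' p' (d' y' s) w"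
      using ps ps' pe by simp
    then show "word_prob d p (d y s) w = word_prob d' p' (d' y' s) w" using ps by simp
  qed
  then show ?thesis using pe pfsaD(7)[OF G2 y' s ps'] by simp
qed

lemma match_all:
  assumes G1: "pfsa S Q d p" and G2: "pfsa S Q' d' p'" and sp: "same_process S Q d p Q' d' p'"
  shows "\<forall>q\<in>Q. \<exists>q'\<in>Q'. \<forall>w. set w \<subseteq> S \<longrightarrow> word_prob d p q w = word_prob d' p' q' w"
proof
  fix q assume q: "q \<in> Q"
  have same: "\<forall>x. set x \<subseteq> S \<longrightarrow> PP Q d p (stationary S Q d p) x = PP Q' d' p' (stationary S Q' d' p') x"
    using sp unfolding same_process_def PP_process by (metis in_listsI subsetD)
  obtain r r' where r: "r \<in> Q" and r': "r' \<in> Q'"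
    and rr: "\<forall>w. set w \<subseteq> S \<longrightarrow> word_prob d p r w = word_prob d' p' r' w"
    using sync_main[OF mach_stationary[OF G1] mach_stationary[OF G2] same] by blast
  have path: "(r, q) \<in> (pfsa_edges S Q d p)\<^sup>*" using pfsaD(8)[OF G1 r q] .
  then show "\<exists>q'\<in>Q'. \<forall>w. set w \<subseteq> S \<longrightarrow> word_prob d p q w = word_prob d' p' q' w"
  proof (induction rule: rtrancl_induct)
    case base then show ?case using r' rr by blast
  next
    case (step y z)
    from step.hyps(2) obtain s where ys: "y \<in> Q" "s \<in> S" "p y s > 0" "z = d y s"
      unfolding pfsa_edges_def by auto
    from step.IH obtain y' where y': "y' \<in> Q'"
      and eq: "\<forall>w. set w \<subseteq> S \<longrightarrow> word_prob d p y w = word_prob d' p' y' w" by blast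
    show ?case using match_one[OF G1 G2 ys(1) y' eq ys(2,3)] ys(4) by blast
  qed
qed

lemma hom_same:
  fixes h :: "'q \<Rightarrow> 'r"
  assumes G: "pfsa S Q d p" and G2: "pfsa S Q2 d2 p2" and hQ: "h ` Q = Q2"
    and hp: "\<forall>q\<in>Q. \<forall>s\<in>S. p2 (h q) s = p q s"
    and hd: "\<forall>q\<in>Q. \<forall>s\<in>S. p q s > 0 \<longrightarrow> h (d q s) = d2 (h q) s"
  shows "same_process S Q d p Q2 d2 p2"
proof -
  have fQ: "finite Q" and fQ2: "finite Q2" and fS: "finite S" using pfsaD G G2 by auto
  have wpe: "word_prob d2 p2 (h q) x = word_prob d p q x" if "q \<in> Q" "set x \<subseteq> S" for q x
    using that
  proof (induction x arbitrary: q)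
    case Nil then show ?case by simp
  next
    case (Cons s x)
    then have s: "s \<in> S" and x: "set x \<subseteq> S" by auto
    show ?case
    proof (cases "p q s > 0")
      case True
      have "d q s \<in> Q" using pfsaD(7)[OF G Cons.prems(1) s True] .
      then have "word_prob d2 p2 (h (d q s)) x = word_prob d p (d q s) x" using Cons.IH x by blast
      then show ?thesis using True hp hd Cons.prems(1) s by simp
    next
      case False
      then show ?thesis using hp Cons.prems(1) s by simp
    qed
  qed
  let ?T = "trans_prob S d p" and ?T2 = "trans_prob S d2 p2"
  define v where "v = stationary S Q d p"
  have v: "is_stationary S Q d p v" unfolding v_def by (rule stationary_is[OF G])
  define v2 where "v2 r = (\<Sum>q\<in>{q\<in>Q. h q = r}. v q)" for r
  have grp: "(\<Sum>r\<in>Q2. \<Sum>q\<in>{q\<in>Q. h q = r}. f q) = (\<Sum>q\<in>Q. f q)" for f :: "'q \<Rightarrow> real"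
    by (rule sum.group[OF fQ fQ2]) (use hQ in auto)
  have T2eq: "?T2 (h q) r' = (\<Sum>q'\<in>{q'\<in>Q. h q' = r'}. ?T q q')" if q: "q \<in> Q" for q r'
  proof -
    define A where "A = {s\<in>S. p q s > 0 \<and> h (d q s) = r'}"
    have "?T2 (h q) r' = (\<Sum>s\<in>A. p q s)"
      unfolding trans_prob_def A_def using hp hd q by (intro sum.cong) auto
    also have "\<dots> = (\<Sum>q'\<in>{q'\<in>Q. h q' = r'}. \<Sum>s\<in>{s\<in>A. d q s = q'}. p q s)"
      by (rule sum.group[symmetric]) (use fS fQ pfsaD(7)[OF G q] in \<open>auto simp: A_def\<close>)
    also have "\<dots> = (\<Sum>q'\<in>{q'\<in>Q. h q' = r'}. ?T q q')"
      unfolding trans_prob_def A_def by (intro sum.cong) auto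
    finally show ?thesis .
  qed
  have v2st: "is_stationary S Q2 d2 p2 v2"
    unfolding is_stationary_def
  proof (intro conjI ballI allI impI)
    fix r assume "r \<in> Q2" then show "0 \<le> v2 r" unfolding v2_def
      using v unfolding is_stationary_def by (intro sum_nonneg) auto
  next
    fix r assume "r \<notin> Q2"
    then have "{q\<in>Q. h q = r} = {}" using hQ by auto
    then show "v2 r = 0" unfolding v2_def by (simp only: sum.empty)
  next
    show "(\<Sum>r\<in>Q2. v2 r) = 1" unfolding v2_def grp using v unfolding is_stationary_def by simp
  next
    fix r' assume r': "r' \<in> Q2"
    have "(\<Sum>r\<in>Q2. v2 r * ?T2 r r') = (\<Sum>r\<in>Q2. \<Sum>q\<in>{q\<in>Q. h q = r}. v q * ?T2 (h q) r')"
      unfolding v2_def by (intro sum.cong refl) (auto simp: sum_distrib_right)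
    also have "\<dots> = (\<Sum>q\<in>Q. v q * ?T2 (h q) r')" by (rule grp)
    also have "\<dots> = (\<Sum>q\<in>Q. \<Sum>q'\<in>{q'\<in>Q. h q' = r'}. v q * ?T q q')"
      by (intro sum.cong refl) (simp add: T2eq sum_distrib_left)
    also have "\<dots> = (\<Sum>q'\<in>{q'\<in>Q. h q' = r'}. \<Sum>q\<in>Q. v q * ?T q q')"
      by (rule sum.swap)
    also have "\<dots> = (\<Sum>q'\<in>{q'\<in>Q. h q' = r'}. v q')"
      using v unfolding is_stationary_def by (intro sum.cong) auto
    finally show "(\<Sum>r\<in>Q2. v2 r * ?T2 r r') = v2 r'" unfolding v2_def .
  qed
  have st2: "stationary S Q2 d2 p2 = v2" by (rule stationary_eq[OF G2 v2st])
  show ?thesis unfolding same_process_def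
  proof
    fix x assume "x \<in> lists S"
    then have x: "set x \<subseteq> S" by auto
    have "process_prob S Q2 d2 p2 x = (\<Sum>r\<in>Q2. \<Sum>q\<in>{q\<in>Q. h q = r}. v q * word_prob d2 p2 (h q) x)"
      unfolding process_prob_def st2 v2_def by (intro sum.cong refl) (auto simp: sum_distrib_right)
    also have "\<dots> = (\<Sum>q\<in>Q. v q * word_prob d2 p2 (h q) x)" by (rule grp)
    also have "\<dots> = (\<Sum>q\<in>Q. v q * word_prob d p q x)" using wpe x by simp
    finally show "process_prob S Q d p x = process_prob S Q2 d2 p2 x"
      unfolding process_prob_def v_def by simp
  qed
qed

lemma equiv_conv: "equiv_states S d p q q' \<longleftrightarrow> (\<forall>w. set w \<subseteq> S \<longrightarrow> word_prob d p q w = word_prob d p q' w)"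
  unfolding equiv_states_def by (auto simp: in_lists_conv_set)

lemma quotient_smaller:
  assumes G: "pfsa S Q d p" and q1: "q1 \<in> Q" and q2: "q2 \<in> Q" and ne: "q1 \<noteq> q2"
    and eq12: "equiv_states S d p q1 q2"
  shows "\<exists>(Q2::nat set) d2 p2. pfsa S Q2 d2 p2 \<and> card Q2 < card Q \<and> same_process S Q d p Q2 d2 p2"
proof -
  let ?E = "equiv_states S d p"
  have fQ: "finite Q" and fS: "finite S" and neS: "S \<noteq> {}" and neQ: "Q \<noteq> {}" using pfsaD[OF G] by auto
  have Esym: "?E a b \<Longrightarrow> ?E b a" for a b unfolding equiv_states_def by auto
  have Etrans: "?E a b \<Longrightarrow> ?E b c \<Longrightarrow> ?E a c" for a b c unfolding equiv_states_def by auto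
  have Erefl: "?E a a" for a unfolding equiv_states_def by auto
  define cls where "cls q = {q'\<in>Q. ?E q q'}" for q
  define C where "C = cls ` Q"
  have fC: "finite C" unfolding C_def using fQ by simp
  obtain enc where enc: "bij_betw enc C {0..<card C}" using ex_bij_betw_finite_nat[OF fC] by blast
  define h where "h q = enc (cls q)" for q
  define Q2 where "Q2 = {0..<card C}"
  have cls_eq: "cls a = cls b \<longleftrightarrow> ?E a b" if "a \<in> Q" "b \<in> Q" for a b
  proof
    assume "cls a = cls b"
    then have "b \<in> cls a" using that Erefl unfolding cls_def by auto
    then show "?E a b" unfolding cls_def by simp
  next
    assume "?E a b"
    then show "cls a = cls b" unfolding cls_def using Esym Etrans by blast
  qed
  have h_eq: "h a = h b \<longleftrightarrow> ?E a b" if "a \<in> Q" "b \<in> Q" for a b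
  proof -
    have "cls a \<in> C" "cls b \<in> C" using that unfolding C_def by auto
    moreover have "inj_on enc C" using enc by (rule bij_betw_imp_inj_on)
    ultimately have "enc (cls a) = enc (cls b) \<longleftrightarrow> cls a = cls b"
      using inj_on_eq_iff by metis
    then show ?thesis unfolding h_def using cls_eq[OF that] by simp
  qed
  have hQ: "h ` Q = Q2"
  proof -
    have "h ` Q = enc ` (cls ` Q)" unfolding h_def by auto
    also have "\<dots> = Q2" using bij_betw_imp_surj_on[OF enc] unfolding C_def Q2_def .
    finally show ?thesis .
  qed
  define dec where "dec i = (SOME q. q \<in> Q \<and> h q = i)" for i
  have dec: "dec i \<in> Q \<and> h (dec i) = i" if "i \<in> Q2" for i
  proof -
    have "\<exists>q. q \<in> Q \<and> h q = i" using that hQ by auto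
    then show ?thesis unfolding dec_def by (rule someI_ex)
  qed
  have dec_h: "?E (dec (h q)) q" if "q \<in> Q" for q
  proof -
    have "h q \<in> Q2" using hQ that by auto
    then have dq: "dec (h q) \<in> Q" and hh: "h (dec (h q)) = h q" using dec by auto
    show ?thesis using h_eq[OF dq that] hh by simp
  qed
  have Ep: "p a s = p b s" if "a \<in> Q" "b \<in> Q" "?E a b" "s \<in> S" for a b s
  proof -
    have "[s] \<in> lists S" using that(4) by simp
    then have "word_prob d p a [s] = word_prob d p b [s]" using that(3) unfolding equiv_states_def by blast
    then show ?thesis using wp_single[OF G that(1,4)] wp_single[OF G that(2,4)] by simp
  qed
  have Ed: "?E (d a s) (d b s) \<and> d b s \<in> Q" if "a \<in> Q" "b \<in> Q" "?E a b" "s \<in> S" "p a s > 0" for a b s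
    using match_one[OF G G that(1,2) _ that(4,5)] that(3) unfolding equiv_conv by auto
  define p2 where "p2 i s = p (dec i) s" for i s
  define d2 where "d2 i s = h (d (dec i) s)" for i s
  have hp: "\<forall>q\<in>Q. \<forall>s\<in>S. p2 (h q) s = p q s"
  proof (intro ballI)
    fix q s assume q: "q \<in> Q" and s: "s \<in> S"
    have hq: "h q \<in> Q2" using hQ q by auto
    have "dec (h q) \<in> Q" using dec[OF hq] by simp
    then show "p2 (h q) s = p q s" unfolding p2_def using Ep[OF _ q dec_h[OF q] s] by simp
  qed
  have hd: "\<forall>q\<in>Q. \<forall>s\<in>S. p q s > 0 \<longrightarrow> h (d q s) = d2 (h q) s"
  proof (intro ballI impI)
    fix q s assume q: "q \<in> Q" and s: "s \<in> S" and ps: "p q s > 0"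
    have hq: "h q \<in> Q2" using hQ q by auto
    have dq: "dec (h q) \<in> Q" using dec[OF hq] by simp
    have e: "?E q (dec (h q))" using Esym[OF dec_h[OF q]] .
    have "?E (d q s) (d (dec (h q)) s) \<and> d (dec (h q)) s \<in> Q" using Ed[OF q dq e s ps] .
    moreover have "d q s \<in> Q" using pfsaD(7)[OF G q s ps] .
    ultimately show "h (d q s) = d2 (h q) s" unfolding d2_def using h_eq by blast
  qed
  have G2: "pfsa S Q2 d2 p2"
    unfolding pfsa_def
  proof (intro conjI ballI impI)
    show "finite S" "S \<noteq> {}" by fact+
    show "finite Q2" unfolding Q2_def by simp
    show "Q2 \<noteq> {}" using hQ neQ by auto
  next
    fix i s assume i: "i \<in> Q2" and s: "s \<in> S"
    show "0 \<le> p2 i s" unfolding p2_def using pfsaD(5)[OF G _ s] dec[OF i] by simp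
  next
    fix i assume i: "i \<in> Q2"
    show "(\<Sum>s\<in>S. p2 i s) = 1" unfolding p2_def using pfsaD(6)[OF G] dec[OF i] by simp
  next
    fix i s assume i: "i \<in> Q2" and s: "s \<in> S" and ps: "0 < p2 i s"
    have "d (dec i) s \<in> Q" using pfsaD(7)[OF G _ s] dec[OF i] ps unfolding p2_def by simp
    then show "d2 i s \<in> Q2" unfolding d2_def using hQ by auto
  next
    fix i j assume i: "i \<in> Q2" and j: "j \<in> Q2"
    obtain a b where a: "a \<in> Q" "i = h a" and b: "b \<in> Q" "j = h b" using i j hQ by auto
    have path: "(a, b) \<in> (pfsa_edges S Q d p)\<^sup>*" using pfsaD(8)[OF G a(1) b(1)] .
    have "(h a, h b) \<in> (pfsa_edges S Q2 d2 p2)\<^sup>*" using path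
    proof (induction rule: rtrancl_induct)
      case base then show ?case by simp
    next
      case (step y z)
      from step.hyps(2) obtain s where ys: "y \<in> Q" "s \<in> S" "p y s > 0" "z = d y s"
        unfolding pfsa_edges_def by auto
      have hy: "h y \<in> Q2" using hQ ys(1) by auto
      have p2y: "p2 (h y) s > 0" using hp ys by simp
      have "h z = d2 (h y) s" using hd ys by simp
      then have "(h y, h z) \<in> pfsa_edges S Q2 d2 p2"
        unfolding pfsa_edges_def using hy ys(2) p2y by blast
      then show ?case using step.IH by simp
    qed
    then show "(i, j) \<in> (pfsa_edges S Q2 d2 p2)\<^sup>*" using a b by simp
  qed
  have card: "card Q2 < card Q"
  proof -
    have "\<not> inj_on cls Q"
    proof
      assume "inj_on cls Q"
      moreover have "cls q1 = cls q2" using cls_eq[OF q1 q2] eq12 by simp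
      ultimately show False using q1 q2 ne unfolding inj_on_def by blast
    qed
    then have "card (cls ` Q) \<noteq> card Q" using inj_on_iff_eq_card[OF fQ] by blast
    moreover have "card (cls ` Q) \<le> card Q" by (rule card_image_le[OF fQ])
    ultimately show ?thesis unfolding Q2_def C_def by simp
  qed
  have "same_process S Q d p Q2 d2 p2" by (rule hom_same[OF G G2 hQ hp hd])
  then show ?thesis using G2 card by blast
qed

lemma part1:
  assumes G: "pfsa S Q d p"
  shows "irreducible_pfsa S Q d p \<longleftrightarrow> (\<forall>q\<in>Q. \<forall>q'\<in>Q. equiv_states S d p q q' \<longrightarrow> q = q')"
proof
  assume irr: "irreducible_pfsa S Q d p"
  show "\<forall>q\<in>Q. \<forall>q'\<in>Q. equiv_states S d p q q' \<longrightarrow> q = q'"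
  proof (intro ballI impI)
    fix q q' assume q: "q \<in> Q" and q': "q' \<in> Q" and e: "equiv_states S d p q q'"
    show "q = q'"
    proof (rule ccontr)
      assume "q \<noteq> q'"
      from quotient_smaller[OF G q q' this e] show False using irr unfolding irreducible_pfsa_def by blast
    qed
  qed
next
  assume ne: "\<forall>q\<in>Q. \<forall>q'\<in>Q. equiv_states S d p q q' \<longrightarrow> q = q'"
  show "irreducible_pfsa S Q d p"
    unfolding irreducible_pfsa_def
  proof
    assume "\<exists>(Q' :: nat set) d' p'. pfsa S Q' d' p' \<and> card Q' < card Q \<and> same_process S Q d p Q' d' p'"
    then obtain Q' :: "nat set" and d' p' where G': "pfsa S Q' d' p'" and c: "card Q' < card Q"
      and sp: "same_process S Q d p Q' d' p'" by blast
    have m: "\<forall>q\<in>Q. \<exists>q'\<in>Q'. \<forall>w. set w \<subseteq> S \<longrightarrow> word_prob d p q w = word_prob d' p' q' w"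
      by (rule match_all[OF G G' sp])
    define f where "f q = (SOME q'. q' \<in> Q' \<and> (\<forall>w. set w \<subseteq> S \<longrightarrow> word_prob d p q w = word_prob d' p' q' w))" for q
    have f: "f q \<in> Q' \<and> (\<forall>w. set w \<subseteq> S \<longrightarrow> word_prob d p q w = word_prob d' p' (f q) w)" if "q \<in> Q" for q
    proof -
      have "\<exists>q'. q' \<in> Q' \<and> (\<forall>w. set w \<subseteq> S \<longrightarrow> word_prob d p q w = word_prob d' p' q' w)"
        using m that by blast
      then show ?thesis unfolding f_def by (rule someI_ex)
    qed
    have inj: "inj_on f Q"
    proof (rule inj_onI)
      fix a b assume a: "a \<in> Q" and b: "b \<in> Q" and fab: "f a = f b"
      have "equiv_states S d p a b" unfolding equiv_conv using f[OF a] f[OF b] fab by auto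
      then show "a = b" using ne a b by blast
    qed
    have "f ` Q \<subseteq> Q'" using f by auto
    then have "card Q \<le> card Q'" using card_inj_on_le[OF inj] pfsaD(3)[OF G'] by blast
    then show False using c by simp
  qed
qed

lemma same_process_sym: "same_process S Q d p Q' d' p' \<Longrightarrow> same_process S Q' d' p' Q d p"
  unfolding same_process_def by simp

lemma part2:
  assumes G1: "pfsa S Q1 d1 p1" and G2: "pfsa S Q2 d2 p2"
    and i1: "irreducible_pfsa S Q1 d1 p1" and i2: "irreducible_pfsa S Q2 d2 p2"
    and sp: "same_process S Q1 d1 p1 Q2 d2 p2"
  shows "\<exists>f. bij_betw f Q1 Q2 \<and>
          (\<forall>q\<in>Q1. \<forall>s\<in>S. p2 (f q) s = p1 q s \<and>
                (p1 q s > 0 \<longrightarrow> f (d1 q s) = d2 (f q) s))"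
proof -
  have ne1: "\<forall>q\<in>Q1. \<forall>q'\<in>Q1. equiv_states S d1 p1 q q' \<longrightarrow> q = q'" using part1[OF G1] i1 by blast
  have ne2: "\<forall>q\<in>Q2. \<forall>q'\<in>Q2. equiv_states S d2 p2 q q' \<longrightarrow> q = q'" using part1[OF G2] i2 by blast
  have m: "\<forall>q\<in>Q1. \<exists>q'\<in>Q2. \<forall>w. set w \<subseteq> S \<longrightarrow> word_prob d1 p1 q w = word_prob d2 p2 q' w"
    by (rule match_all[OF G1 G2 sp])
  have m': "\<forall>q'\<in>Q2. \<exists>q\<in>Q1. \<forall>w. set w \<subseteq> S \<longrightarrow> word_prob d2 p2 q' w = word_prob d1 p1 q w"
    by (rule match_all[OF G2 G1 same_process_sym[OF sp]])
  define f where "f q = (SOME q'. q' \<in> Q2 \<and> (\<forall>w. set w \<subseteq> S \<longrightarrow> word_prob d1 p1 q w = word_prob d2 p2 q' w))" for q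
  have f: "f q \<in> Q2 \<and> (\<forall>w. set w \<subseteq> S \<longrightarrow> word_prob d1 p1 q w = word_prob d2 p2 (f q) w)" if "q \<in> Q1" for q
  proof -
    have "\<exists>q'. q' \<in> Q2 \<and> (\<forall>w. set w \<subseteq> S \<longrightarrow> word_prob d1 p1 q w = word_prob d2 p2 q' w)"
      using m that by blast
    then show ?thesis unfolding f_def by (rule someI_ex)
  qed
  have inj: "inj_on f Q1"
  proof (rule inj_onI)
    fix a b assume a: "a \<in> Q1" and b: "b \<in> Q1" and fab: "f a = f b"
    have "equiv_states S d1 p1 a b" unfolding equiv_conv using f[OF a] f[OF b] fab by auto
    then show "a = b" using ne1 a b by blast
  qed
  have img: "f ` Q1 = Q2"
  proof
    show "f ` Q1 \<subseteq> Q2" using f by auto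
    show "Q2 \<subseteq> f ` Q1"
    proof
      fix q' assume q': "q' \<in> Q2"
      obtain q where q: "q \<in> Q1" and e: "\<forall>w. set w \<subseteq> S \<longrightarrow> word_prob d2 p2 q' w = word_prob d1 p1 q w"
        using m' q' by blast
      have "equiv_states S d2 p2 (f q) q'" unfolding equiv_conv using f[OF q] e by auto
      then have "f q = q'" using ne2 f[OF q] q' by blast
      then show "q' \<in> f ` Q1" using q by blast
    qed
  qed
  have props: "\<forall>q\<in>Q1. \<forall>s\<in>S. p2 (f q) s = p1 q s \<and> (p1 q s > 0 \<longrightarrow> f (d1 q s) = d2 (f q) s)"
  proof (intro ballI conjI impI)
    fix q s assume q: "q \<in> Q1" and s: "s \<in> S"
    have fq: "f q \<in> Q2" and eq: "\<forall>w. set w \<subseteq> S \<longrightarrow> word_prob d1 p1 q w = word_prob d2 p2 (f q) w"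
      using f[OF q] by auto
    have "word_prob d1 p1 q [s] = word_prob d2 p2 (f q) [s]" by (rule eq[rule_format]) (use s in simp)
    then show "p2 (f q) s = p1 q s" using wp_single[OF G1 q s] wp_single[OF G2 fq s] by simp
    assume ps: "p1 q s > 0"
    have mo: "p2 (f q) s = p1 q s \<and> d2 (f q) s \<in> Q2 \<and>
         (\<forall>w. set w \<subseteq> S \<longrightarrow> word_prob d1 p1 (d1 q s) w = word_prob d2 p2 (d2 (f q) s) w)"
      by (rule match_one[OF G1 G2 q fq eq s ps])
    have dq: "d1 q s \<in> Q1" using pfsaD(7)[OF G1 q s ps] .
    have "equiv_states S d2 p2 (f (d1 q s)) (d2 (f q) s)" unfolding equiv_conv
      using f[OF dq] mo by auto
    then show "f (d1 q s) = d2 (f q) s" using ne2 f[OF dq] mo by blast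
  qed
  show ?thesis using inj img props unfolding bij_betw_def by blast
qed

theorem mainTheorem6:
  fixes S :: "'a set"
  shows
   "(\<forall>(Q :: 'q set) d p. pfsa S Q d p \<longrightarrow>
       (irreducible_pfsa S Q d p \<longleftrightarrow>
        (\<forall>q\<in>Q. \<forall>q'\<in>Q. equiv_states S d p q q' \<longrightarrow> q = q'))) \<and>
    (\<forall>(Q1 :: 'q set) d1 p1 (Q2 :: 'r set) d2 p2.
       pfsa S Q1 d1 p1 \<and> pfsa S Q2 d2 p2 \<and>
       irreducible_pfsa S Q1 d1 p1 \<and> irreducible_pfsa S Q2 d2 p2 \<and>
       same_process S Q1 d1 p1 Q2 d2 p2 \<longrightarrow>
       (\<exists>f. bij_betw f Q1 Q2 \<and>
          (\<forall>q\<in>Q1. \<forall>s\<in>S. p2 (f q) s = p1 q s \<and>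
                (p1 q s > 0 \<longrightarrow> f (d1 q s) = d2 (f q) s))))"
proof (intro conjI allI impI)
  fix Q :: "'q set" and d p assume "pfsa S Q d p"
  then show "irreducible_pfsa S Q d p \<longleftrightarrow> (\<forall>q\<in>Q. \<forall>q'\<in>Q. equiv_states S d p q q' \<longrightarrow> q = q')"
    by (rule part1)
next
  fix Q1 :: "'q set" and d1 p1 and Q2 :: "'r set" and d2 p2
  assume a: "pfsa S Q1 d1 p1 \<and> pfsa S Q2 d2 p2 \<and>
       irreducible_pfsa S Q1 d1 p1 \<and> irreducible_pfsa S Q2 d2 p2 \<and>
       same_process S Q1 d1 p1 Q2 d2 p2"
  show "\<exists>f. bij_betw f Q1 Q2 \<and>
          (\<forall>q\<in>Q1. \<forall>s\<in>S. p2 (f q) s = p1 q s \<and>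
                (p1 q s > 0 \<longrightarrow> f (d1 q s) = d2 (f q) s))"
    using a by (intro part2) auto
qed

end
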